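(* Let $T:=12$, $U:=\mathcal{L}^2([0,T];\mathbb{R})\times\mathcal{L}^2([0,T];\mathbb{R})$, $K_2:=\{(u_1,u_2)\in U:|u_1(t)|\le0.8,\ |u_2(t)|\le0.4\ \forall t\in[0,T]\}$, and $\varphi(u):=\int_0^T(u_1^2(t)+u_2^2(t))\,dt$. For $u\in U$, $t\in[0,T]$ let $G_3(u)(t):=\pi/2+0.2\int_0^t\int_0^r(u_1(s)-u_2(s))\,ds\,dr$ and define $h=(h_1,\ldots,h_6):U\to\mathbb{R}^6$ by $h_1(u):=-10+\int_0^T\int_0^r(u_1+u_2)(s)\cos G_3(u)(s)\,ds\,dr$, $h_2(u):=-10+\int_0^T\int_0^r(u_1+u_2)(s)\sin G_3(u)(s)\,ds\,dr$, $h_3(u):=G_3(u)(T)$, $h_4(u):=\int_0^T(u_1+u_2)(s)\cos G_3(u)(s)\,ds$, $h_5(u):=\int_0^T(u_1+u_2)(s)\sin G_3(u)(s)\,ds$, $h_6(u):=0.2\int_0^T(u_1-u_2)(s)\,ds$. Consider the free-flying robot problem $(P3)$: minimize $\varphi(u)$ subject to $u\in K_2$, $h(u)=0$, and the dualizing parameterization $f:U\times\mathbb{R}^6\to\mathbb{R}\cup\{+\infty\}$, $f(u,z):=\varphi(u)+\delta_z(h(u))+\delta_{K_2}(u)$. Then: (H0) $\varphi$ is proper and weakly lower semicontinuous; (H1) every level set of $\varphi$ is weakly compact; (H2) $f$ is proper, weakly lower semicontinuous and weakly level-compact.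
   Context: $h(u)=0$ is equivalent to the dynamics $\dot x_1=x_4,\dot x_2=x_5,\dot x_3=x_6,\dot x_4=(u_1+u_2)\cos x_3,\dot x_5=(u_1+u_2)\sin x_3,\dot x_6=0.2(u_1-u_2)$ with $x(0)=(-10,-10,\pi/2,0,0,0)$ and $x(12)=0$. $\delta_C$ is the indicator function of $C$ ($0$ on $C$, $+\infty$ elsewhere), $\delta_z:=\delta_{\{z\}}$. Proper: never $-\infty$ and not identically $+\infty$. Weakly compact: weak closure compact in the weak topology. $f:U\times H\to[-\infty,\infty]$ is weakly level-compact if for each $\bar z\in H$, $\alpha\in\mathbb{R}$ there exist a weakly open neighbourhood $V$ of $\bar z$ and a weakly compact $B\subset U$ with $\{u\in U:f(u,z)\le\alpha\}\subset B$ for all $z\in V$. *)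

theory Defs
  imports "HOL-Analysis.Analysis"
begin

text \<open>Elements of U = L2([0,T]) x L2([0,T]) are represented
  by pairs of real functions that are Lebesgue measurable and square integrable on [0,T];
  only their values on [0,T] (up to null sets) matter for everything below.\<close>

definition T_end :: real where "T_end = 12"

definition L2T :: "(real \<Rightarrow> real) set" where
  "L2T = {v. v \<in> borel_measurable (lebesgue_on {0..T_end}) \<and>
              integrable (lebesgue_on {0..T_end}) (\<lambda>t. (v t)\<^sup>2)}"

definition U :: "((real \<Rightarrow> real) \<times> (real \<Rightarrow> real)) set" where
  "U = L2T \<times> L2T"

definition innerU :: "((real \<Rightarrow> real) \<times> (real \<Rightarrow> real)) \<Rightarrow> ((real \<Rightarrow> real) \<times> (real \<Rightarrow> real)) \<Rightarrow> real" where
  "innerU u g = integral\<^sup>L (lebesgue_on {0..T_end}) (\<lambda>t. fst u t * fst g t + snd u t * snd g t)"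

text \<open>Weak topology on the Hilbert space U: the coarsest topology on U making all
  functionals u \<mapsto> <u,g> (g \<in> U) continuous (Riesz representation of U*).\<close>
definition weakU :: "((real \<Rightarrow> real) \<times> (real \<Rightarrow> real)) topology" where
  "weakU = pullback_topology U (\<lambda>u. restrict (\<lambda>g. innerU u g) U)
             (product_topology (\<lambda>g. euclideanreal) U)"

text \<open>K2 (constraints understood almost everywhere, as for L2 classes).\<close>
definition K2 :: "((real \<Rightarrow> real) \<times> (real \<Rightarrow> real)) set" where
  "K2 = {u \<in> U. (AE t in lebesgue_on {0..T_end}. \<bar>fst u t\<bar> \<le> 0.8 \<and> \<bar>snd u t\<bar> \<le> 0.4)}"

definition phi :: "((real \<Rightarrow> real) \<times> (real \<Rightarrow> real)) \<Rightarrow> ereal" where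
  "phi u = ereal (integral\<^sup>L (lebesgue_on {0..T_end}) (\<lambda>t. (fst u t)\<^sup>2 + (snd u t)\<^sup>2))"

definition G3 :: "((real \<Rightarrow> real) \<times> (real \<Rightarrow> real)) \<Rightarrow> real \<Rightarrow> real" where
  "G3 u t = pi / 2 + 0.2 * integral\<^sup>L (lebesgue_on {0..t})
      (\<lambda>r. integral\<^sup>L (lebesgue_on {0..r}) (\<lambda>s. fst u s - snd u s))"

definition h :: "((real \<Rightarrow> real) \<times> (real \<Rightarrow> real)) \<Rightarrow> real ^ 6" where
  "h u = vector
    [ -10 + integral\<^sup>L (lebesgue_on {0..T_end}) (\<lambda>r. integral\<^sup>L (lebesgue_on {0..r})
              (\<lambda>s. (fst u s + snd u s) * cos (G3 u s))),
      -10 + integral\<^sup>L (lebesgue_on {0..T_end}) (\<lambda>r. integral\<^sup>L (lebesgue_on {0..r})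
              (\<lambda>s. (fst u s + snd u s) * sin (G3 u s))),
      G3 u T_end,
      integral\<^sup>L (lebesgue_on {0..T_end}) (\<lambda>s. (fst u s + snd u s) * cos (G3 u s)),
      integral\<^sup>L (lebesgue_on {0..T_end}) (\<lambda>s. (fst u s + snd u s) * sin (G3 u s)),
      0.2 * integral\<^sup>L (lebesgue_on {0..T_end}) (\<lambda>s. fst u s - snd u s) ]"

definition indicatorF :: "'a set \<Rightarrow> 'a \<Rightarrow> ereal" where
  "indicatorF C x = (if x \<in> C then 0 else \<infinity>)"

definition f_param :: "((real \<Rightarrow> real) \<times> (real \<Rightarrow> real)) \<Rightarrow> real ^ 6 \<Rightarrow> ereal" where
  "f_param u z = phi u + indicatorF {z} (h u) + indicatorF K2 u"

definition proper_on :: "'a set \<Rightarrow> ('a \<Rightarrow> ereal) \<Rightarrow> bool" where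
  "proper_on A F \<longleftrightarrow> (\<forall>x\<in>A. F x \<noteq> -\<infinity>) \<and> (\<exists>x\<in>A. F x \<noteq> \<infinity>)"

definition lsc_wrt :: "'a topology \<Rightarrow> ('a \<Rightarrow> ereal) \<Rightarrow> bool" where
  "lsc_wrt X F \<longleftrightarrow> (\<forall>\<alpha>::real. closedin X {x \<in> topspace X. F x \<le> ereal \<alpha>})"

definition rel_compact_in :: "'a topology \<Rightarrow> 'a set \<Rightarrow> bool" where
  "rel_compact_in X S \<longleftrightarrow> compactin X (X closure_of S)"

definition weakly_level_compact ::
  "((real \<Rightarrow> real) \<times> (real \<Rightarrow> real) \<Rightarrow> real ^ 6 \<Rightarrow> ereal) \<Rightarrow> bool" where
  "weakly_level_compact F \<longleftrightarrow>
     (\<forall>zbar::real^6. \<forall>\<alpha>::real. \<exists>V B. open V \<and> zbar \<in> V \<and> B \<subseteq> U \<and> rel_compact_in weakU B \<and>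
        (\<forall>z\<in>V. {u \<in> U. F u z \<le> ereal \<alpha>} \<subseteq> B))"

end

theory Submission
  imports Defs
begin


abbreviation MT where "MT \<equiv> lebesgue_on {0..T_end}"

lemma T_end_val: "T_end = 12" by (simp add: T_end_def)

lemma finite_MT: "finite_measure MT"
  by (rule finite_measure_lebesgue_on) auto

lemma L2T_meas: "v \<in> L2T \<Longrightarrow> v \<in> borel_measurable MT"
  by (simp add: L2T_def)

lemma L2T_sq: "v \<in> L2T \<Longrightarrow> integrable MT (\<lambda>t. (v t)\<^sup>2)"
  by (simp add: L2T_def)

lemma L2T_integrable: assumes "v \<in> L2T" shows "integrable MT v"
proof (rule Bochner_Integration.integrable_bound)
  show "integrable MT (\<lambda>t. 1 + (v t)\<^sup>2)"
    using L2T_sq[OF assms] by auto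
  show "v \<in> borel_measurable MT" using L2T_meas[OF assms] .
  show "AE x in MT. norm (v x) \<le> norm (1 + (v x)\<^sup>2)"
  proof (rule AE_I2)
    fix x have "0 \<le> (\<bar>v x\<bar> - 1)\<^sup>2" by simp
    then have "2 * \<bar>v x\<bar> \<le> 1 + \<bar>v x\<bar>\<^sup>2" by (simp add: power2_diff)
    then have "\<bar>v x\<bar> \<le> 1 + (v x)\<^sup>2" by simp
    then show "norm (v x) \<le> norm (1 + (v x)\<^sup>2)" by simp
  qed
qed

lemma L2T_mult: assumes "v \<in> L2T" "w \<in> L2T" shows "integrable MT (\<lambda>t. v t * w t)"
proof (rule Bochner_Integration.integrable_bound)
  show "integrable MT (\<lambda>t. (v t)\<^sup>2 + (w t)\<^sup>2)"
    using L2T_sq[OF assms(1)] L2T_sq[OF assms(2)] by auto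
  show "(\<lambda>t. v t * w t) \<in> borel_measurable MT" using L2T_meas[OF assms(1)] L2T_meas[OF assms(2)] by measurable
  show "AE x in MT. norm (v x * w x) \<le> norm ((v x)\<^sup>2 + (w x)\<^sup>2)"
  proof (rule AE_I2)
    fix x have "0 \<le> (\<bar>v x\<bar> - \<bar>w x\<bar>)\<^sup>2" by simp
    then have "2 * (\<bar>v x\<bar> * \<bar>w x\<bar>) \<le> \<bar>v x\<bar>\<^sup>2 + \<bar>w x\<bar>\<^sup>2" by (simp add: power2_diff)
    moreover have "0 \<le> \<bar>v x\<bar> * \<bar>w x\<bar>" by simp
    ultimately have "\<bar>v x\<bar> * \<bar>w x\<bar> \<le> (v x)\<^sup>2 + (w x)\<^sup>2" by (simp only: power2_abs)
    then have "\<bar>v x * w x\<bar> \<le> (v x)\<^sup>2 + (w x)\<^sup>2" by (simp add: abs_mult)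
    then show "norm (v x * w x) \<le> norm ((v x)\<^sup>2 + (w x)\<^sup>2)" by simp
  qed
qed

lemma L2T_add: assumes "v \<in> L2T" "w \<in> L2T" shows "(\<lambda>t. v t + w t) \<in> L2T"
proof -
  have "(\<lambda>t. (v t + w t)\<^sup>2) = (\<lambda>t. (v t)\<^sup>2 + 2 * (v t * w t) + (w t)\<^sup>2)"
    by (simp add: power2_sum algebra_simps)
  moreover have "integrable MT (\<lambda>t. (v t)\<^sup>2 + 2 * (v t * w t) + (w t)\<^sup>2)"
    using L2T_sq[OF assms(1)] L2T_sq[OF assms(2)] L2T_mult[OF assms] by auto
  ultimately show ?thesis using L2T_meas[OF assms(1)] L2T_meas[OF assms(2)]
    by (simp add: L2T_def)
qed

lemma L2T_scale: assumes "v \<in> L2T" shows "(\<lambda>t. c * v t) \<in> L2T"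
proof -
  have "(\<lambda>t. (c * v t)\<^sup>2) = (\<lambda>t. c\<^sup>2 * (v t)\<^sup>2)" by (simp add: power_mult_distrib)
  then show ?thesis using L2T_sq[OF assms] L2T_meas[OF assms] by (simp add: L2T_def)
qed

lemma L2T_zero: "(\<lambda>t. 0) \<in> L2T" by (simp add: L2T_def)

definition addU :: "((real \<Rightarrow> real) \<times> (real \<Rightarrow> real)) \<Rightarrow> ((real \<Rightarrow> real) \<times> (real \<Rightarrow> real)) \<Rightarrow> ((real \<Rightarrow> real) \<times> (real \<Rightarrow> real))"
  where "addU u v = (\<lambda>t. fst u t + fst v t, \<lambda>t. snd u t + snd v t)"
definition scaleU :: "real \<Rightarrow> ((real \<Rightarrow> real) \<times> (real \<Rightarrow> real)) \<Rightarrow> ((real \<Rightarrow> real) \<times> (real \<Rightarrow> real))"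
  where "scaleU c u = (\<lambda>t. c * fst u t, \<lambda>t. c * snd u t)"
definition zeroU :: "((real \<Rightarrow> real) \<times> (real \<Rightarrow> real))" where "zeroU = (\<lambda>t. 0, \<lambda>t. 0)"
definition nqU where "nqU u = innerU u u"

lemma addU_U: "u \<in> U \<Longrightarrow> v \<in> U \<Longrightarrow> addU u v \<in> U"
  by (auto simp: U_def addU_def intro!: L2T_add)
lemma scaleU_U: "u \<in> U \<Longrightarrow> scaleU c u \<in> U"
  by (auto simp: U_def scaleU_def intro!: L2T_scale)
lemma zeroU_U: "zeroU \<in> U"
  by (auto simp: U_def zeroU_def L2T_zero)

lemma U_fst: "u \<in> U \<Longrightarrow> fst u \<in> L2T" and U_snd: "u \<in> U \<Longrightarrow> snd u \<in> L2T"
  by (auto simp: U_def)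

lemma innerU_integrable: assumes "u \<in> U" "g \<in> U"
  shows "integrable MT (\<lambda>t. fst u t * fst g t + snd u t * snd g t)"
  using L2T_mult[OF U_fst[OF assms(1)] U_fst[OF assms(2)]] L2T_mult[OF U_snd[OF assms(1)] U_snd[OF assms(2)]]
  by auto

lemma innerU_sym: "innerU u g = innerU g u"
  by (simp add: innerU_def mult.commute)

lemma innerU_add_left: assumes "u \<in> U" "v \<in> U" "g \<in> U"
  shows "innerU (addU u v) g = innerU u g + innerU v g"
proof -
  have "innerU (addU u v) g = integral\<^sup>L MT (\<lambda>t. (fst u t * fst g t + snd u t * snd g t) + (fst v t * fst g t + snd v t * snd g t))"
    unfolding innerU_def addU_def by (simp add: algebra_simps)
  also have "\<dots> = innerU u g + innerU v g"
    unfolding innerU_def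
    by (rule Bochner_Integration.integral_add[OF innerU_integrable[OF assms(1,3)] innerU_integrable[OF assms(2,3)]])
  finally show ?thesis .
qed

lemma innerU_scale_left: "innerU (scaleU c u) g = c * innerU u g"
proof -
  have "innerU (scaleU c u) g = integral\<^sup>L MT (\<lambda>t. c * (fst u t * fst g t + snd u t * snd g t))"
    unfolding innerU_def scaleU_def by (simp add: algebra_simps)
  then show ?thesis by (simp add: innerU_def)
qed

lemma innerU_add_right: "u \<in> U \<Longrightarrow> v \<in> U \<Longrightarrow> g \<in> U \<Longrightarrow> innerU g (addU u v) = innerU g u + innerU g v"
  using innerU_add_left innerU_sym by metis

lemma innerU_scale_right: "innerU g (scaleU c u) = c * innerU g u"
  using innerU_scale_left innerU_sym by metis

lemma nqU_nonneg: "0 \<le> nqU u"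
  unfolding nqU_def innerU_def by (rule integral_nonneg_AE) auto

lemma phi_nqU: "phi u = ereal (nqU u)"
  by (simp add: phi_def nqU_def innerU_def power2_eq_square)

lemma quad_discr:
  fixes a b c :: real
  assumes "\<And>t. 0 \<le> a + 2 * b * t + c * t\<^sup>2" "0 \<le> c"
  shows "b\<^sup>2 \<le> a * c"
proof (cases "c = 0")
  case True
  have "b = 0"
  proof (rule ccontr)
    assume "b \<noteq> 0"
    then have "0 \<le> a + 2 * b * (- (\<bar>a\<bar> + 1) / (2 * b))" using assms(1)[of "- (\<bar>a\<bar> + 1) / (2 * b)"] True by simp
    also have "\<dots> = a - (\<bar>a\<bar> + 1)" using \<open>b \<noteq> 0\<close> by (simp add: field_simps)
    finally show False by simp
  qed
  then show ?thesis using True by simp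
next
  case False
  then have c: "c > 0" using assms(2) by simp
  have "0 \<le> a + 2 * b * (- b / c) + c * (- b / c)\<^sup>2" by (rule assms(1))
  also have "\<dots> = a - b\<^sup>2 / c" using c by (simp add: field_simps power2_eq_square)
  finally have "b\<^sup>2 / c \<le> a" by simp
  then show ?thesis using c by (simp add: field_simps mult.commute)
qed

lemma nqU_add_scale: assumes "u \<in> U" "g \<in> U"
  shows "nqU (addU u (scaleU t g)) = nqU u + 2 * innerU u g * t + nqU g * t\<^sup>2"
proof -
  have sg: "scaleU t g \<in> U" using scaleU_U[OF assms(2)] .
  have "nqU (addU u (scaleU t g)) = innerU u (addU u (scaleU t g)) + innerU (scaleU t g) (addU u (scaleU t g))"
    unfolding nqU_def using innerU_add_left[OF assms(1) sg addU_U[OF assms(1) sg]] .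
  also have "\<dots> = innerU u u + innerU u (scaleU t g) + (innerU (scaleU t g) u + innerU (scaleU t g) (scaleU t g))"
    using innerU_add_right[OF assms(1) sg assms(1)] innerU_add_right[OF assms(1) sg sg] by simp
  also have "\<dots> = nqU u + 2 * innerU u g * t + nqU g * t\<^sup>2"
    by (simp add: innerU_scale_left innerU_scale_right nqU_def innerU_sym[of g u] power2_eq_square algebra_simps)
  finally show ?thesis .
qed

lemma cauchy_schwarzU: assumes "u \<in> U" "g \<in> U"
  shows "(innerU u g)\<^sup>2 \<le> nqU u * nqU g"
proof (rule quad_discr)
  fix t show "0 \<le> nqU u + 2 * innerU u g * t + nqU g * t\<^sup>2"
    using nqU_add_scale[OF assms, of t] nqU_nonneg by metis
qed (rule nqU_nonneg)

lemma cauchy_schwarzU': assumes "u \<in> U" "g \<in> U"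
  shows "\<bar>innerU u g\<bar> \<le> sqrt (nqU u) * sqrt (nqU g)"
proof -
  have "\<bar>innerU u g\<bar> = sqrt ((innerU u g)\<^sup>2)" by simp
  also have "\<dots> \<le> sqrt (nqU u * nqU g)" using cauchy_schwarzU[OF assms] by (rule real_sqrt_le_mono)
  finally show ?thesis by (simp add: real_sqrt_mult)
qed

lemma nqU_triangle: assumes "u \<in> U" "v \<in> U"
  shows "sqrt (nqU (addU u v)) \<le> sqrt (nqU u) + sqrt (nqU v)"
proof -
  have v1: "v = scaleU 1 v" by (simp add: scaleU_def)
  have "nqU (addU u v) = nqU u + 2 * innerU u v + nqU v"
    using nqU_add_scale[OF assms, of 1] v1 by simp
  also have "\<dots> \<le> nqU u + 2 * (sqrt (nqU u) * sqrt (nqU v)) + nqU v"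
    using cauchy_schwarzU'[OF assms] by simp
  also have "\<dots> = (sqrt (nqU u) + sqrt (nqU v))\<^sup>2"
    using nqU_nonneg[of u] nqU_nonneg[of v] by (simp add: power2_sum)
  finally show ?thesis
    by (metis real_le_lsqrt real_sqrt_ge_zero add_nonneg_nonneg nqU_nonneg)
qed


lemma L2T_diff: "v \<in> L2T \<Longrightarrow> w \<in> L2T \<Longrightarrow> (\<lambda>t. v t - w t) \<in> L2T"
  using L2T_add[of v "\<lambda>t. (-1) * w t"] L2T_scale[of w "-1"] by simp

lemma L2T_abs: "v \<in> L2T \<Longrightarrow> (\<lambda>t. \<bar>v t\<bar>) \<in> L2T"
  unfolding L2T_def by auto

lemma L2T_one: "(\<lambda>t. 1) \<in> L2T"
  unfolding L2T_def by auto

lemma L1_le_L2: assumes "v \<in> L2T"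
  shows "integral\<^sup>L MT (\<lambda>t. \<bar>v t\<bar>) \<le> sqrt (12 * integral\<^sup>L MT (\<lambda>t. (v t)\<^sup>2))"
proof -
  have a: "(\<lambda>t. \<bar>v t\<bar>, \<lambda>t. 0) \<in> U" using L2T_abs[OF assms] L2T_zero by (simp add: U_def)
  have b: "(\<lambda>t. 1, \<lambda>t. 0) \<in> U" using L2T_one L2T_zero by (simp add: U_def)
  have "(innerU (\<lambda>t. \<bar>v t\<bar>, \<lambda>t. 0) (\<lambda>t. 1, \<lambda>t. 0))\<^sup>2 \<le> nqU (\<lambda>t. \<bar>v t\<bar>, \<lambda>t. 0) * nqU (\<lambda>t. 1, \<lambda>t. 0)"
    by (rule cauchy_schwarzU[OF a b])
  moreover have "innerU (\<lambda>t. \<bar>v t\<bar>, \<lambda>t. 0) (\<lambda>t. 1, \<lambda>t. 0) = integral\<^sup>L MT (\<lambda>t. \<bar>v t\<bar>)"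
    by (simp add: innerU_def)
  moreover have "nqU (\<lambda>t. \<bar>v t\<bar>, \<lambda>t. 0) = integral\<^sup>L MT (\<lambda>t. (v t)\<^sup>2)"
    by (simp add: nqU_def innerU_def power2_eq_square)
  moreover have "nqU (\<lambda>t. 1, \<lambda>t. 0) = 12"
    by (simp add: nqU_def innerU_def T_end_val measure_restrict_space)
  ultimately have "(integral\<^sup>L MT (\<lambda>t. \<bar>v t\<bar>))\<^sup>2 \<le> 12 * integral\<^sup>L MT (\<lambda>t. (v t)\<^sup>2)" by simp
  then show ?thesis by (rule real_le_rsqrt)
qed

lemma L2T_complete:
  fixes s :: "nat \<Rightarrow> real \<Rightarrow> real"
  assumes s: "\<And>n. s n \<in> L2T"
    and cau: "\<And>e. e > 0 \<Longrightarrow> \<exists>N. \<forall>i\<ge>N. \<forall>j\<ge>N. integral\<^sup>L MT (\<lambda>t. (s i t - s j t)\<^sup>2) < e"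
  shows "\<exists>v\<in>L2T. \<forall>e>0. \<exists>N. \<forall>n\<ge>N. integral\<^sup>L MT (\<lambda>t. (v t - s n t)\<^sup>2) < e"
proof -
  have meas[measurable]: "\<And>n. s n \<in> borel_measurable MT" using s L2T_meas by blast
  have L1: "\<exists>N. \<forall>i\<ge>N. \<forall>j\<ge>N. (LINT x|MT. norm (s i x - s j x)) < e" if "e > 0" for e
  proof -
    have "e\<^sup>2 / 12 > 0" using that by simp
    from cau[OF this] obtain N where N: "\<forall>i\<ge>N. \<forall>j\<ge>N. integral\<^sup>L MT (\<lambda>t. (s i t - s j t)\<^sup>2) < e\<^sup>2 / 12"
      by blast
    have "(LINT x|MT. norm (s i x - s j x)) < e" if "i \<ge> N" "j \<ge> N" for i j
    proof -
      have "(LINT x|MT. norm (s i x - s j x)) \<le> sqrt (12 * integral\<^sup>L MT (\<lambda>t. (s i t - s j t)\<^sup>2))"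
        using L1_le_L2[OF L2T_diff[OF s s]] by simp
      also have "\<dots> < sqrt (12 * (e\<^sup>2 / 12))"
      proof (intro real_sqrt_less_mono)
        have "integral\<^sup>L MT (\<lambda>t. (s i t - s j t)\<^sup>2) < e\<^sup>2 / 12" using N that by blast
        then show "12 * integral\<^sup>L MT (\<lambda>t. (s i t - s j t)\<^sup>2) < 12 * (e\<^sup>2 / 12)" by linarith
      qed
      also have "\<dots> = e" using \<open>e > 0\<close> by simp
      finally show ?thesis .
    qed
    then show ?thesis by blast
  qed
  obtain r where r: "strict_mono r" and ae: "AE x in MT. Cauchy (\<lambda>i. s (r i) x)"
    using cauchy_L1_AE_cauchy_subseq[OF L2T_integrable[OF s] L1] by blast
  define v where "v x = lim (\<lambda>i. s (r i) x)" for x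
  have vmeas[measurable]: "v \<in> borel_measurable MT" unfolding v_def by measurable
  have conv: "AE x in MT. (\<lambda>i. s (r i) x) \<longlonglongrightarrow> v x"
    using ae by eventually_elim (simp add: v_def Cauchy_convergent_iff convergent_LIMSEQ_iff)
  have main: "integrable MT (\<lambda>t. (v t - s n t)\<^sup>2) \<and> integral\<^sup>L MT (\<lambda>t. (v t - s n t)\<^sup>2) \<le> e"
    if e: "e > 0" and N: "\<forall>i\<ge>N. \<forall>j\<ge>N. integral\<^sup>L MT (\<lambda>t. (s i t - s j t)\<^sup>2) < e" and n: "n \<ge> N" for e N n
  proof -
    have "(\<integral>\<^sup>+ t. ennreal ((v t - s n t)\<^sup>2) \<partial>MT) = (\<integral>\<^sup>+ t. liminf (\<lambda>i. ennreal ((s (r i) t - s n t)\<^sup>2)) \<partial>MT)"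
    proof (rule nn_integral_cong_AE)
      show "AE t in MT. ennreal ((v t - s n t)\<^sup>2) = liminf (\<lambda>i. ennreal ((s (r i) t - s n t)\<^sup>2))"
        using conv
      proof eventually_elim
        case (elim t)
        have "(\<lambda>i. ennreal ((s (r i) t - s n t)\<^sup>2)) \<longlonglongrightarrow> ennreal ((v t - s n t)\<^sup>2)"
          by (rule tendsto_ennrealI) (intro tendsto_intros elim)
        then have "liminf (\<lambda>i. ennreal ((s (r i) t - s n t)\<^sup>2)) = ennreal ((v t - s n t)\<^sup>2)"
          by (intro lim_imp_Liminf) auto
        then show ?case by simp
      qed
    qed
    also have "\<dots> \<le> liminf (\<lambda>i. \<integral>\<^sup>+ t. ennreal ((s (r i) t - s n t)\<^sup>2) \<partial>MT)"
      by (rule nn_integral_liminf) measurable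
    also have "\<dots> \<le> liminf (\<lambda>i. ennreal e)"
    proof (rule Liminf_mono)
      show "\<forall>\<^sub>F i in sequentially. (\<integral>\<^sup>+ t. ennreal ((s (r i) t - s n t)\<^sup>2) \<partial>MT) \<le> ennreal e"
      proof (rule eventually_sequentiallyI[of N])
        fix i assume "N \<le> i"
        then have "r i \<ge> N" using r seq_suble[OF r, of i] by linarith
        have "(\<integral>\<^sup>+ t. ennreal ((s (r i) t - s n t)\<^sup>2) \<partial>MT) = ennreal (integral\<^sup>L MT (\<lambda>t. (s (r i) t - s n t)\<^sup>2))"
          using L2T_sq[OF L2T_diff[OF s s, of "r i" n]] by (intro nn_integral_eq_integral) auto
        also have "\<dots> \<le> ennreal e" using N \<open>r i \<ge> N\<close> n by (intro ennreal_leI) (meson less_imp_le)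
        finally show "(\<integral>\<^sup>+ t. ennreal ((s (r i) t - s n t)\<^sup>2) \<partial>MT) \<le> ennreal e" .
      qed
    qed
    also have "\<dots> = ennreal e" by (simp add: Liminf_const)
    finally have le: "(\<integral>\<^sup>+ t. ennreal ((v t - s n t)\<^sup>2) \<partial>MT) \<le> ennreal e" .
    have int: "integrable MT (\<lambda>t. (v t - s n t)\<^sup>2)"
    proof (rule integrableI_bounded)
      show "(\<lambda>t. (v t - s n t)\<^sup>2) \<in> borel_measurable MT" by measurable
      have "(\<integral>\<^sup>+ t. ennreal (norm ((v t - s n t)\<^sup>2)) \<partial>MT) = (\<integral>\<^sup>+ t. ennreal ((v t - s n t)\<^sup>2) \<partial>MT)" by simp
      also have "\<dots> < \<infinity>" using le by (simp add: le_less_trans)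
      finally show "(\<integral>\<^sup>+ t. ennreal (norm ((v t - s n t)\<^sup>2)) \<partial>MT) < \<infinity>" .
    qed
    have "ennreal (integral\<^sup>L MT (\<lambda>t. (v t - s n t)\<^sup>2)) \<le> ennreal e"
      using le by (subst nn_integral_eq_integral[symmetric]) (auto intro: int)
    then have "integral\<^sup>L MT (\<lambda>t. (v t - s n t)\<^sup>2) \<le> e" using e by (simp add: ennreal_le_iff)
    with int show ?thesis by simp
  qed
  obtain N1 where N1: "\<forall>i\<ge>N1. \<forall>j\<ge>N1. integral\<^sup>L MT (\<lambda>t. (s i t - s j t)\<^sup>2) < 1" using cau[of 1] by auto
  have "(\<lambda>t. v t - s N1 t) \<in> L2T" using main[OF _ N1, of N1] by (simp add: L2T_def)
  then have "(\<lambda>t. (v t - s N1 t) + s N1 t) \<in> L2T" by (rule L2T_add[OF _ s])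
  then have vL2: "v \<in> L2T" by simp
  show ?thesis
  proof (intro bexI[OF _ vL2] allI impI)
    fix e :: real assume "e > 0"
    then obtain N where N: "\<forall>i\<ge>N. \<forall>j\<ge>N. integral\<^sup>L MT (\<lambda>t. (s i t - s j t)\<^sup>2) < e / 2" using cau[of "e/2"] by auto
    show "\<exists>N. \<forall>n\<ge>N. integral\<^sup>L MT (\<lambda>t. (v t - s n t)\<^sup>2) < e"
    proof (intro exI allI impI)
      fix n assume "n \<ge> N"
      have "integral\<^sup>L MT (\<lambda>t. (v t - s n t)\<^sup>2) \<le> e / 2" using main[OF _ N \<open>n \<ge> N\<close>] \<open>e > 0\<close> by simp
      then show "integral\<^sup>L MT (\<lambda>t. (v t - s n t)\<^sup>2) < e" using \<open>e > 0\<close> by linarith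
    qed
  qed
qed

abbreviation diffU where "diffU x y \<equiv> addU x (scaleU (-1) y)"

lemma diffU_U: "x \<in> U \<Longrightarrow> y \<in> U \<Longrightarrow> diffU x y \<in> U"
  by (intro addU_U scaleU_U)

lemma diffU_simps: "fst (diffU x y) = (\<lambda>t. fst x t - fst y t)" "snd (diffU x y) = (\<lambda>t. snd x t - snd y t)"
  by (auto simp: addU_def scaleU_def)

lemma nqU_split: assumes "w \<in> U"
  shows "nqU w = integral\<^sup>L MT (\<lambda>t. (fst w t)\<^sup>2) + integral\<^sup>L MT (\<lambda>t. (snd w t)\<^sup>2)"
proof -
  have "nqU w = integral\<^sup>L MT (\<lambda>t. (fst w t)\<^sup>2 + (snd w t)\<^sup>2)"
    by (simp add: nqU_def innerU_def power2_eq_square)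
  also have "\<dots> = integral\<^sup>L MT (\<lambda>t. (fst w t)\<^sup>2) + integral\<^sup>L MT (\<lambda>t. (snd w t)\<^sup>2)"
    using L2T_sq[OF U_fst[OF assms]] L2T_sq[OF U_snd[OF assms]] by (rule Bochner_Integration.integral_add)
  finally show ?thesis .
qed

lemma int_sq_nonneg: fixes f :: "real \<Rightarrow> real" shows "0 \<le> integral\<^sup>L MT (\<lambda>t. (f t)\<^sup>2)"
  by (rule integral_nonneg_AE) auto

lemma U_complete:
  fixes g :: "nat \<Rightarrow> (real \<Rightarrow> real) \<times> (real \<Rightarrow> real)"
  assumes g: "\<And>n. g n \<in> U"
    and cau: "\<And>e. e > 0 \<Longrightarrow> \<exists>N. \<forall>i\<ge>N. \<forall>j\<ge>N. nqU (diffU (g i) (g j)) < e"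
  shows "\<exists>z\<in>U. \<forall>e>0. \<exists>N. \<forall>n\<ge>N. nqU (diffU z (g n)) < e"
proof -
  have split: "nqU (diffU (g i) (g j)) = integral\<^sup>L MT (\<lambda>t. (fst (g i) t - fst (g j) t)\<^sup>2)
        + integral\<^sup>L MT (\<lambda>t. (snd (g i) t - snd (g j) t)\<^sup>2)" for i j
    using nqU_split[OF diffU_U[OF g g, of i j]] by (simp add: diffU_simps)
  have "\<exists>v\<in>L2T. \<forall>e>0. \<exists>N. \<forall>n\<ge>N. integral\<^sup>L MT (\<lambda>t. (v t - fst (g n) t)\<^sup>2) < e"
  proof (rule L2T_complete)
    show "fst (g n) \<in> L2T" for n using U_fst[OF g] .
    fix e :: real assume "e > 0"
    then obtain N where N: "\<forall>i\<ge>N. \<forall>j\<ge>N. nqU (diffU (g i) (g j)) < e" using cau by blast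
    show "\<exists>N. \<forall>i\<ge>N. \<forall>j\<ge>N. integral\<^sup>L MT (\<lambda>t. (fst (g i) t - fst (g j) t)\<^sup>2) < e"
    proof (intro exI[of _ N] allI impI)
      fix i j assume "i \<ge> N" "j \<ge> N"
      then have "nqU (diffU (g i) (g j)) < e" using N by blast
      then show "integral\<^sup>L MT (\<lambda>t. (fst (g i) t - fst (g j) t)\<^sup>2) < e"
        using split[of i j] int_sq_nonneg[of "\<lambda>t. snd (g i) t - snd (g j) t"] by linarith
    qed
  qed
  then obtain v1 where v1: "v1 \<in> L2T" "\<forall>e>0. \<exists>N. \<forall>n\<ge>N. integral\<^sup>L MT (\<lambda>t. (v1 t - fst (g n) t)\<^sup>2) < e" by blast
  have "\<exists>v\<in>L2T. \<forall>e>0. \<exists>N. \<forall>n\<ge>N. integral\<^sup>L MT (\<lambda>t. (v t - snd (g n) t)\<^sup>2) < e"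
  proof (rule L2T_complete)
    show "snd (g n) \<in> L2T" for n using U_snd[OF g] .
    fix e :: real assume "e > 0"
    then obtain N where N: "\<forall>i\<ge>N. \<forall>j\<ge>N. nqU (diffU (g i) (g j)) < e" using cau by blast
    show "\<exists>N. \<forall>i\<ge>N. \<forall>j\<ge>N. integral\<^sup>L MT (\<lambda>t. (snd (g i) t - snd (g j) t)\<^sup>2) < e"
    proof (intro exI[of _ N] allI impI)
      fix i j assume "i \<ge> N" "j \<ge> N"
      then have "nqU (diffU (g i) (g j)) < e" using N by blast
      then show "integral\<^sup>L MT (\<lambda>t. (snd (g i) t - snd (g j) t)\<^sup>2) < e"
        using split[of i j] int_sq_nonneg[of "\<lambda>t. fst (g i) t - fst (g j) t"] by linarith
    qed
  qed
  then obtain v2 where v2: "v2 \<in> L2T" "\<forall>e>0. \<exists>N. \<forall>n\<ge>N. integral\<^sup>L MT (\<lambda>t. (v2 t - snd (g n) t)\<^sup>2) < e" by blast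
  have zU: "(v1, v2) \<in> U" using v1 v2 by (simp add: U_def)
  show ?thesis
  proof (intro bexI[OF _ zU] allI impI)
    fix e :: real assume "e > 0"
    then have e2: "e / 2 > 0" by simp
    obtain N1 where N1: "\<forall>n\<ge>N1. integral\<^sup>L MT (\<lambda>t. (v1 t - fst (g n) t)\<^sup>2) < e / 2" using v1(2) e2 by blast
    obtain N2 where N2: "\<forall>n\<ge>N2. integral\<^sup>L MT (\<lambda>t. (v2 t - snd (g n) t)\<^sup>2) < e / 2" using v2(2) e2 by blast
    show "\<exists>N. \<forall>n\<ge>N. nqU (diffU (v1, v2) (g n)) < e"
    proof (intro exI[of _ "max N1 N2"] allI impI)
      fix n assume "max N1 N2 \<le> n"
      then have a: "integral\<^sup>L MT (\<lambda>t. (v1 t - fst (g n) t)\<^sup>2) < e / 2"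
        and b: "integral\<^sup>L MT (\<lambda>t. (v2 t - snd (g n) t)\<^sup>2) < e / 2" using N1 N2 by auto
      have "nqU (diffU (v1, v2) (g n)) = integral\<^sup>L MT (\<lambda>t. (v1 t - fst (g n) t)\<^sup>2) + integral\<^sup>L MT (\<lambda>t. (v2 t - snd (g n) t)\<^sup>2)"
        using nqU_split[OF diffU_U[OF zU g, of n]] by (simp add: diffU_simps)
      then show "nqU (diffU (v1, v2) (g n)) < e" using a b by linarith
    qed
  qed
qed


lemma innerU_zero_left: "innerU zeroU g = 0"
  by (simp add: innerU_def zeroU_def)

lemma nqU_scale: "nqU (scaleU c w) = c\<^sup>2 * nqU w"
  by (simp add: nqU_def innerU_scale_left innerU_scale_right power2_eq_square)

lemma scaleU_one: "scaleU 1 y = y"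
  by (simp add: scaleU_def)

lemma parallelogramU: assumes "x \<in> U" "y \<in> U"
  shows "nqU (diffU x y) + nqU (addU x y) = 2 * nqU x + 2 * nqU y"
  using nqU_add_scale[OF assms, of "-1"] nqU_add_scale[OF assms, of 1] by (simp add: scaleU_one)

lemma addU_diffU_cancel: "addU y (diffU z y) = z"
  unfolding addU_def scaleU_def by (simp add: prod_eq_iff)

lemma lin_aux1: "(x::real) < d + a \<Longrightarrow> y < d + b \<Longrightarrow> 4 * d \<le> w \<Longrightarrow> 2 * x + 2 * y - w < 2 * (d + a) + 2 * (d + b) - 4 * d"
  unfolding distrib_left by linarith
lemma lin_aux2: "(a::real) \<le> c \<Longrightarrow> b \<le> c \<Longrightarrow> c < e / 4 \<Longrightarrow> 2 * (d + a) + 2 * (d + b) - 4 * d \<le> e"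
  unfolding distrib_left by linarith

lemma riesz:
  fixes L :: "(real \<Rightarrow> real) \<times> (real \<Rightarrow> real) \<Rightarrow> real" and C :: real
  assumes add: "\<And>g k. g \<in> U \<Longrightarrow> k \<in> U \<Longrightarrow> L (addU g k) = L g + L k"
    and scale: "\<And>g c. g \<in> U \<Longrightarrow> L (scaleU c g) = c * L g"
    and bnd: "\<And>g. g \<in> U \<Longrightarrow> \<bar>L g\<bar> \<le> C * sqrt (nqU g)"
    and C: "0 \<le> C"
  shows "\<exists>u\<in>U. \<forall>g\<in>U. innerU u g = L g"
proof (cases "\<forall>g\<in>U. L g = 0")
  case True
  then show ?thesis using zeroU_U innerU_zero_left by metis
next
  case False
  then obtain g0 where g0: "g0 \<in> U" "L g0 \<noteq> 0" by blast
  define V where "V = {g \<in> U. L g = 1}"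
  have g1: "scaleU (1 / L g0) g0 \<in> V" using g0 scale scaleU_U by (simp add: V_def)
  define d where "d = Inf (nqU ` V)"
  have ne: "nqU ` V \<noteq> {}" using g1 by blast
  have bdd: "bdd_below (nqU ` V)" using nqU_nonneg by (intro bdd_belowI[of _ 0]) auto
  have dle: "d \<le> nqU g" if "g \<in> V" for g unfolding d_def using bdd that by (intro cInf_lower) auto
  have ex: "\<exists>g. g \<in> V \<and> nqU g < d + inverse (real (Suc n))" for n
  proof -
    have "Inf (nqU ` V) < d + inverse (real (Suc n))" unfolding d_def by simp
    then show ?thesis using cInf_less_iff[OF ne bdd] by auto
  qed
  then obtain gs where gsV: "\<And>n. gs n \<in> V" and gsl: "\<And>n. nqU (gs n) < d + inverse (real (Suc n))"
    by metis
  have gsU: "gs n \<in> U" for n using gsV by (simp add: V_def)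
  have mid: "4 * d \<le> nqU (addU x y)" if "x \<in> V" "y \<in> V" for x y
  proof -
    have xy: "x \<in> U" "y \<in> U" "L x = 1" "L y = 1" using that by (auto simp: V_def)
    have "scaleU (1/2) (addU x y) \<in> V"
      using xy add scale addU_U scaleU_U by (simp add: V_def)
    then have "d \<le> nqU (scaleU (1/2) (addU x y))" by (rule dle)
    then show ?thesis by (simp add: nqU_scale power2_eq_square)
  qed
  have cauchy: "\<exists>N. \<forall>i\<ge>N. \<forall>j\<ge>N. nqU (diffU (gs i) (gs j)) < e" if "e > 0" for e
  proof -
    obtain N where N: "inverse (real (Suc N)) < e / 4" using reals_Archimedean[of "e/4"] \<open>e > 0\<close> by auto
    have "nqU (diffU (gs i) (gs j)) < e" if "i \<ge> N" "j \<ge> N" for i j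
    proof -
      have ii: "inverse (real (Suc i)) \<le> inverse (real (Suc N))" using that by (simp add: le_imp_inverse_le)
      have jj: "inverse (real (Suc j)) \<le> inverse (real (Suc N))" using that by (simp add: le_imp_inverse_le)
      have "nqU (diffU (gs i) (gs j)) = 2 * nqU (gs i) + 2 * nqU (gs j) - nqU (addU (gs i) (gs j))"
        using parallelogramU[OF gsU gsU, of i j] by simp
      also have "\<dots> < 2 * (d + inverse (real (Suc i))) + 2 * (d + inverse (real (Suc j))) - 4 * d"
        using lin_aux1[OF gsl[of i] gsl[of j] mid[OF gsV gsV, of i j]] .
      also have "\<dots> \<le> e" using lin_aux2[OF ii jj N] .
      finally show ?thesis .
    qed
    then show ?thesis by blast
  qed
  obtain z where zU: "z \<in> U" and conv: "\<And>e. e > 0 \<Longrightarrow> \<exists>N. \<forall>n\<ge>N. nqU (diffU z (gs n)) < e"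
    using U_complete[OF gsU cauchy] by blast
  have Lgs: "L (gs n) = 1" for n using gsV by (simp add: V_def)
  have Ldiff: "L (diffU z (gs n)) = L z - 1" for n
    using add[OF zU scaleU_U[OF gsU]] scale[OF gsU] Lgs by simp
  have Lz: "L z = 1"
  proof (rule ccontr)
    assume "L z \<noteq> 1"
    then have e: "\<bar>L z - 1\<bar> > 0" by simp
    define e where "e = (\<bar>L z - 1\<bar> / (C + 1))\<^sup>2"
    have "e > 0" using e C by (simp add: e_def)
    then obtain N where N: "nqU (diffU z (gs N)) < e" using conv by blast
    have "\<bar>L z - 1\<bar> \<le> C * sqrt (nqU (diffU z (gs N)))"
      using bnd[OF diffU_U[OF zU gsU]] Ldiff by metis
    also have "\<dots> \<le> C * sqrt e" using N C by (intro mult_left_mono real_sqrt_le_mono) auto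
    also have "\<dots> = C * (\<bar>L z - 1\<bar> / (C + 1))" using C by (simp add: e_def)
    also have "\<dots> < \<bar>L z - 1\<bar>" using e C by (simp add: field_simps)
    finally show False by simp
  qed
  then have zV: "z \<in> V" using zU by (simp add: V_def)
  have tend0: "(\<lambda>n. nqU (diffU z (gs n))) \<longlonglongrightarrow> 0"
  proof (rule LIMSEQ_I)
    fix r :: real assume "r > 0"
    then obtain N where "\<forall>n\<ge>N. nqU (diffU z (gs n)) < r" using conv by blast
    then show "\<exists>no. \<forall>n\<ge>no. norm (nqU (diffU z (gs n)) - 0) < r" using nqU_nonneg by auto
  qed
  have tend: "(\<lambda>n. sqrt (d + inverse (real (Suc n))) + sqrt (nqU (diffU z (gs n)))) \<longlonglongrightarrow> sqrt (d + 0) + sqrt 0"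
    by (intro tendsto_intros tend0 LIMSEQ_inverse_real_of_nat)
  have "sqrt (nqU z) \<le> sqrt (d + 0) + sqrt 0"
  proof (rule LIMSEQ_le_const[OF tend], intro exI allI impI)
    fix n :: nat
    have "sqrt (nqU z) = sqrt (nqU (addU (gs n) (diffU z (gs n))))" by (simp add: addU_diffU_cancel)
    also have "\<dots> \<le> sqrt (nqU (gs n)) + sqrt (nqU (diffU z (gs n)))"
      by (rule nqU_triangle[OF gsU diffU_U[OF zU gsU]])
    also have "\<dots> \<le> sqrt (d + inverse (real (Suc n))) + sqrt (nqU (diffU z (gs n)))"
      using gsl[of n] by simp
    finally show "sqrt (nqU z) \<le> sqrt (d + inverse (real (Suc n))) + sqrt (nqU (diffU z (gs n)))" .
  qed
  then have "nqU z \<le> d" by simp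
  with dle[OF zV] have dz: "nqU z = d" by simp
  have orth: "innerU z k = 0" if kU: "k \<in> U" and Lk: "L k = 0" for k
  proof -
    have "0 \<le> 0 + 2 * innerU z k * t + nqU k * t\<^sup>2" for t
    proof -
      have "addU z (scaleU t k) \<in> V"
        using add[OF zU scaleU_U[OF kU]] scale[OF kU] Lz Lk addU_U[OF zU scaleU_U[OF kU]] by (simp add: V_def)
      then have "d \<le> nqU (addU z (scaleU t k))" by (rule dle)
      then show ?thesis using nqU_add_scale[OF zU kU, of t] dz by simp
    qed
    then have "(innerU z k)\<^sup>2 \<le> 0 * nqU k" by (intro quad_discr nqU_nonneg)
    then show ?thesis by simp
  qed
  have dpos: "d > 0"
  proof (rule ccontr)
    assume "\<not> d > 0"
    then have "d = 0" using dz nqU_nonneg[of z] by simp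
    then show False using bnd[OF zU] Lz dz by simp
  qed
  have key: "innerU z g = L g * d" if gU: "g \<in> U" for g
  proof -
    have kU: "diffU g (scaleU (L g) z) \<in> U" using gU zU by (intro diffU_U scaleU_U)
    have "L (diffU g (scaleU (L g) z)) = L g + (-1) * (L g * L z)"
      using add[OF gU scaleU_U[OF scaleU_U[OF zU]]] scale[OF scaleU_U[OF zU]] scale[OF zU] by simp
    then have "L (diffU g (scaleU (L g) z)) = 0" using Lz by simp
    then have "innerU z (diffU g (scaleU (L g) z)) = 0" using orth kU by blast
    moreover have "innerU z (diffU g (scaleU (L g) z)) = innerU z g - L g * d"
      using innerU_add_right[OF gU scaleU_U[OF scaleU_U[OF zU]] zU] dz
      by (simp add: innerU_scale_right nqU_def)
    ultimately show ?thesis by simp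
  qed
  show ?thesis
  proof (intro bexI[of _ "scaleU (1/d) z"] ballI)
    fix g assume "g \<in> U"
    then show "innerU (scaleU (1/d) z) g = L g" using key dpos by (simp add: innerU_scale_left)
  qed (rule scaleU_U[OF zU])
qed


abbreviation embU where "embU u \<equiv> restrict (\<lambda>g. innerU u g) U"

lemma topspace_weakU[simp]: "topspace weakU = U"
  by (auto simp: weakU_def topspace_pullback_topology)

lemma cont_innerU: assumes "g \<in> U" shows "continuous_map weakU euclideanreal (\<lambda>u. innerU u g)"
proof -
  have "continuous_map weakU euclideanreal ((\<lambda>L. L g) \<circ> (\<lambda>u. embU u))"
    unfolding weakU_def by (intro continuous_map_pullback continuous_map_product_projection assms)
  moreover have "((\<lambda>L. L g) \<circ> (\<lambda>u. embU u)) = (\<lambda>u. innerU u g)" using assms by auto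
  ultimately show ?thesis by simp
qed

lemma closedin_all:
  assumes "\<And>i. i \<in> I \<Longrightarrow> closedin X {x \<in> topspace X. P i x}"
  shows "closedin X {x \<in> topspace X. \<forall>i\<in>I. P i x}"
proof (cases "I = {}")
  case True then show ?thesis by simp
next
  case False
  have "{x \<in> topspace X. \<forall>i\<in>I. P i x} = \<Inter> ((\<lambda>i. {x \<in> topspace X. P i x}) ` I)"
    using False by auto
  show ?thesis unfolding \<open>_ = \<Inter> _\<close> by (rule closedin_Inter) (use False assms in auto)
qed

lemma closedin_halfspaces:
  assumes "\<And>p. p \<in> F \<Longrightarrow> fst p \<in> U"
  shows "closedin weakU {u \<in> U. \<forall>p\<in>F. innerU u (fst p) \<le> snd p}"
proof -
  have "closedin weakU {u \<in> topspace weakU. \<forall>p\<in>F. innerU u (fst p) \<le> snd p}"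
  proof (rule closedin_all)
    fix p assume "p \<in> F"
    have "closedin weakU {u \<in> topspace weakU. innerU u (fst p) \<in> {..snd p}}"
      by (rule closedin_continuous_map_preimage[OF cont_innerU[OF assms[OF \<open>p \<in> F\<close>]]]) auto
    then show "closedin weakU {u \<in> topspace weakU. innerU u (fst p) \<le> snd p}" by simp
  qed
  then show ?thesis by simp
qed

lemma ball_eq: assumes "0 \<le> \<alpha>"
  shows "{u \<in> U. phi u \<le> ereal \<alpha>} = {u \<in> U. \<forall>p\<in>(\<lambda>g. (g, sqrt \<alpha> * sqrt (nqU g))) ` U. innerU u (fst p) \<le> snd p}"
proof safe
  fix u g assume u: "u \<in> U" "phi u \<le> ereal \<alpha>" and g: "g \<in> U"
  have "innerU u g \<le> sqrt (nqU u) * sqrt (nqU g)" using cauchy_schwarzU'[OF u(1) g] by simp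
  also have "\<dots> \<le> sqrt \<alpha> * sqrt (nqU g)" using u(2) nqU_nonneg[of g] by (intro mult_right_mono) (auto simp: phi_nqU)
  finally show "innerU u (fst (g, sqrt \<alpha> * sqrt (nqU g))) \<le> snd (g, sqrt \<alpha> * sqrt (nqU g))" by simp
next
  fix u assume u: "u \<in> U" and H: "\<forall>p\<in>(\<lambda>g. (g, sqrt \<alpha> * sqrt (nqU g))) ` U. innerU u (fst p) \<le> snd p"
  then have "nqU u \<le> sqrt \<alpha> * sqrt (nqU u)" unfolding nqU_def by auto
  then have "sqrt (nqU u) * sqrt (nqU u) \<le> sqrt \<alpha> * sqrt (nqU u)" using nqU_nonneg[of u] by simp
  then have "sqrt (nqU u) \<le> sqrt \<alpha>"
  proof (cases "sqrt (nqU u) = 0")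
    case True then show ?thesis using assms by simp
  next
    case False
    then have "0 < sqrt (nqU u)" using nqU_nonneg[of u] by simp
    then show ?thesis using mult_right_le_imp_le \<open>sqrt (nqU u) * sqrt (nqU u) \<le> sqrt \<alpha> * sqrt (nqU u)\<close> by blast
  qed
  then show "phi u \<le> ereal \<alpha>" using nqU_nonneg[of u] by (simp add: phi_nqU)
qed

lemma ball_closed: "closedin weakU {u \<in> U. phi u \<le> ereal \<alpha>}"
proof (cases "0 \<le> \<alpha>")
  case True
  show ?thesis unfolding ball_eq[OF True] by (rule closedin_halfspaces) auto
next
  case False
  have "{u \<in> U. phi u \<le> ereal \<alpha>} = {}"
  proof safe
    fix u assume "u \<in> U" "phi u \<le> ereal \<alpha>"
    then show "u \<in> {}" using nqU_nonneg[of u] False by (simp add: phi_nqU)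
  qed
  then show ?thesis by (metis closedin_empty)
qed

lemma compactin_pullback:
  assumes SA: "S \<subseteq> A" and c: "compactin T (f ` S)"
  shows "compactin (pullback_topology A f T) S"
  unfolding compactin_def
proof (intro conjI allI impI)
  show "S \<subseteq> topspace (pullback_topology A f T)"
    using compactin_subset_topspace[OF c] SA by (auto simp: topspace_pullback_topology)
next
  fix \<U> assume H: "(\<forall>W\<in>\<U>. openin (pullback_topology A f T) W) \<and> S \<subseteq> \<Union> \<U>"
  have "\<forall>W\<in>\<U>. \<exists>V. openin T V \<and> W = f -` V \<inter> A" using H by (simp add: openin_pullback_topology)
  then obtain Vf where Vf: "\<And>W. W \<in> \<U> \<Longrightarrow> openin T (Vf W) \<and> W = f -` (Vf W) \<inter> A" by metis
  have "f ` S \<subseteq> \<Union> (Vf ` \<U>)"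
  proof
    fix y assume "y \<in> f ` S"
    then obtain x where x: "x \<in> S" "y = f x" by blast
    then obtain W where "W \<in> \<U>" "x \<in> W" using H by blast
    then show "y \<in> \<Union> (Vf ` \<U>)" using Vf x by blast
  qed
  then obtain \<F>' where F': "finite \<F>'" "\<F>' \<subseteq> Vf ` \<U>" "f ` S \<subseteq> \<Union> \<F>'"
  proof -
    have cc: "\<forall>\<U>. (\<forall>V\<in>\<U>. openin T V) \<and> f ` S \<subseteq> \<Union> \<U> \<longrightarrow> (\<exists>\<F>. finite \<F> \<and> \<F> \<subseteq> \<U> \<and> f ` S \<subseteq> \<Union> \<F>)"
      using c unfolding compactin_def by blast
    have "\<forall>V\<in>Vf ` \<U>. openin T V" using Vf by blast
    then show ?thesis using cc[rule_format, of "Vf ` \<U>"] \<open>f ` S \<subseteq> \<Union> (Vf ` \<U>)\<close> that by blast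
  qed
  then obtain \<G> where G: "\<G> \<subseteq> \<U>" "finite \<G>" "\<F>' = Vf ` \<G>" by (metis finite_subset_image)
  show "\<exists>\<F>. finite \<F> \<and> \<F> \<subseteq> \<U> \<and> S \<subseteq> \<Union> \<F>"
  proof (intro exI conjI)
    show "S \<subseteq> \<Union> \<G>"
    proof
      fix x assume "x \<in> S"
      then obtain W where "W \<in> \<G>" "f x \<in> Vf W" using F' G by blast
      then show "x \<in> \<Union> \<G>" using Vf[of W] G SA \<open>x \<in> S\<close> by blast
    qed
  qed (use G in auto)
qed


abbreviation PT where "PT \<equiv> product_topology (\<lambda>g. euclideanreal) U"

lemma closed_proj_eq:
  assumes "a \<in> U" "b \<in> U" "c \<in> U"
  shows "closedin PT {L \<in> topspace PT. L a = x * L b + y * L c}"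
proof -
  have "continuous_map PT euclideanreal (\<lambda>L. L a - (x * L b + y * L c))"
    using assms by (intro continuous_map_diff continuous_map_add continuous_map_real_mult_left continuous_map_product_projection)
  from closedin_continuous_map_preimage[OF this, of "{0}"]
  show ?thesis by simp
qed

lemma closed_proj_bnd:
  assumes "a \<in> U"
  shows "closedin PT {L \<in> topspace PT. \<bar>L a\<bar> \<le> c}"
proof -
  have "closedin PT {L \<in> topspace PT. L a \<in> {-c..c}}"
    by (rule closedin_continuous_map_preimage[OF continuous_map_product_projection[OF assms]]) auto
  moreover have "{L \<in> topspace PT. L a \<in> {-c..c}} = {L \<in> topspace PT. \<bar>L a\<bar> \<le> c}" by auto
  ultimately show ?thesis by simp
qed

lemma ball_compact: "compactin weakU {u \<in> U. phi u \<le> ereal \<alpha>}"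
proof (cases "0 \<le> \<alpha>")
  case False
  have "{u \<in> U. phi u \<le> ereal \<alpha>} = {}"
  proof safe
    fix u assume "u \<in> U" "phi u \<le> ereal \<alpha>"
    then show "u \<in> {}" using nqU_nonneg[of u] False by (simp add: phi_nqU)
  qed
  then show ?thesis by (metis compactin_empty)
next
  case True
  define r where "r = sqrt \<alpha>"
  have r0: "0 \<le> r" using True by (simp add: r_def)
  define B where "B = {u \<in> U. phi u \<le> ereal \<alpha>}"
  define A1 where "A1 = {L \<in> topspace PT. \<forall>p\<in>U \<times> U. L (addU (fst p) (snd p)) = 1 * L (fst p) + 1 * L (snd p)}"
  define A2 where "A2 = {L \<in> topspace PT. \<forall>p\<in>U \<times> UNIV. L (scaleU (snd p) (fst p)) = snd p * L (fst p) + 0 * L (fst p)}"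
  define A3 where "A3 = {L \<in> topspace PT. \<forall>g\<in>U. \<bar>L g\<bar> \<le> r * sqrt (nqU g)}"
  have c1: "closedin PT A1" unfolding A1_def
  proof (rule closedin_all)
    fix p assume p: "p \<in> U \<times> U"
    show "closedin PT {L \<in> topspace PT. L (addU (fst p) (snd p)) = 1 * L (fst p) + 1 * L (snd p)}"
      by (rule closed_proj_eq) (use p in \<open>auto intro: addU_U\<close>)
  qed
  have c2: "closedin PT A2" unfolding A2_def
  proof (rule closedin_all)
    fix p assume p: "p \<in> U \<times> (UNIV::real set)"
    show "closedin PT {L \<in> topspace PT. L (scaleU (snd p) (fst p)) = snd p * L (fst p) + 0 * L (fst p)}"
      by (rule closed_proj_eq) (use p in \<open>auto intro: scaleU_U\<close>)
  qed
  have c3: "closedin PT A3" unfolding A3_def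
  proof (rule closedin_all)
    fix g assume "g \<in> U"
    then show "closedin PT {L \<in> topspace PT. \<bar>L g\<bar> \<le> r * sqrt (nqU g)}" by (rule closed_proj_bnd)
  qed
  define K where "K = PiE U (\<lambda>g. {-(r * sqrt (nqU g)) .. r * sqrt (nqU g)})"
  have cK: "compactin PT K" unfolding K_def by (simp add: compactin_PiE)
  have A3K: "A3 \<subseteq> K" unfolding A3_def K_def by (auto simp: PiE_iff abs_le_iff extensional_def)
  have cA: "compactin PT (A1 \<inter> A2 \<inter> A3)"
    using closed_compactin[OF cK _ closedin_Int[OF closedin_Int[OF c1 c2] c3]] A3K by blast
  have eq: "embU ` B = A1 \<inter> A2 \<inter> A3"
  proof
    show "embU ` B \<subseteq> A1 \<inter> A2 \<inter> A3"
    proof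
      fix L assume "L \<in> embU ` B"
      then obtain u where u: "u \<in> U" "phi u \<le> ereal \<alpha>" "L = embU u" by (auto simp: B_def)
      have "L \<in> topspace PT" using u by auto
      moreover have "\<forall>p\<in>U \<times> U. L (addU (fst p) (snd p)) = 1 * L (fst p) + 1 * L (snd p)"
        using u by (auto simp: addU_U innerU_add_right)
      moreover have "\<forall>p\<in>U \<times> UNIV. L (scaleU (snd p) (fst p)) = snd p * L (fst p) + 0 * L (fst p)"
        using u by (auto simp: scaleU_U innerU_scale_right)
      moreover have "\<forall>g\<in>U. \<bar>L g\<bar> \<le> r * sqrt (nqU g)"
      proof
        fix g assume g: "g \<in> U"
        have "\<bar>innerU u g\<bar> \<le> sqrt (nqU u) * sqrt (nqU g)" using cauchy_schwarzU'[OF u(1) g] .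
        also have "\<dots> \<le> r * sqrt (nqU g)" using u(2) nqU_nonneg[of g] unfolding r_def
          by (intro mult_right_mono) (auto simp: phi_nqU)
        finally show "\<bar>L g\<bar> \<le> r * sqrt (nqU g)" using u g by simp
      qed
      ultimately show "L \<in> A1 \<inter> A2 \<inter> A3" by (simp add: A1_def A2_def A3_def)
    qed
  next
    show "A1 \<inter> A2 \<inter> A3 \<subseteq> embU ` B"
    proof
      fix L assume L: "L \<in> A1 \<inter> A2 \<inter> A3"
      have Ltop: "L \<in> topspace PT" using L by (simp add: A1_def)
      have Ladd: "\<And>g k. g \<in> U \<Longrightarrow> k \<in> U \<Longrightarrow> L (addU g k) = L g + L k" using L by (auto simp: A1_def)
      have Lsc: "\<And>g c. g \<in> U \<Longrightarrow> L (scaleU c g) = c * L g" using L by (auto simp: A2_def)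
      have Lb: "\<And>g. g \<in> U \<Longrightarrow> \<bar>L g\<bar> \<le> r * sqrt (nqU g)" using L by (auto simp: A3_def)
      obtain u where u: "u \<in> U" "\<And>g. g \<in> U \<Longrightarrow> innerU u g = L g"
        using riesz[OF Ladd Lsc Lb r0] by blast
      have "nqU u \<le> r * sqrt (nqU u)" using Lb[OF u(1)] u by (simp add: nqU_def)
      then have "sqrt (nqU u) * sqrt (nqU u) \<le> r * sqrt (nqU u)" using nqU_nonneg[of u] by simp
      then have "sqrt (nqU u) \<le> r"
      proof (cases "sqrt (nqU u) = 0")
        case True then show ?thesis using r0 by simp
      next
        case False
        then have "0 < sqrt (nqU u)" using nqU_nonneg[of u] by simp
        then show ?thesis using mult_right_le_imp_le \<open>sqrt (nqU u) * sqrt (nqU u) \<le> r * sqrt (nqU u)\<close> by blast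
      qed
      then have "nqU u \<le> \<alpha>" using True nqU_nonneg[of u] unfolding r_def by simp
      then have uB: "u \<in> B" using u by (simp add: B_def phi_nqU)
      have "embU u = L"
      proof (rule PiE_ext)
        show "embU u \<in> PiE U (\<lambda>_. UNIV)" by simp
        show "L \<in> PiE U (\<lambda>_. UNIV)" using Ltop by simp
        show "\<And>g. g \<in> U \<Longrightarrow> embU u g = L g" using u by simp
      qed
      then show "L \<in> embU ` B" using uB by blast
    qed
  qed
  have "compactin weakU B"
    unfolding weakU_def by (rule compactin_pullback) (auto simp: B_def[symmetric] eq cA, simp add: B_def)
  then show ?thesis by (simp add: B_def)
qed


definition nearU where
  "nearU u0 P \<longleftrightarrow> (\<exists>Gs \<delta>. finite Gs \<and> Gs \<subseteq> U \<and> \<delta> > 0 \<and>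
      (\<forall>u\<in>K2. (\<forall>g\<in>Gs. \<bar>innerU u g - innerU u0 g\<bar> < \<delta>) \<longrightarrow> P u))"

lemma nearU_conj:
  assumes "nearU u0 P" "nearU u0 Q" shows "nearU u0 (\<lambda>u. P u \<and> Q u)"
proof -
  obtain G1 d1 where 1: "finite G1" "G1 \<subseteq> U" "d1 > 0" "\<forall>u\<in>K2. (\<forall>g\<in>G1. \<bar>innerU u g - innerU u0 g\<bar> < d1) \<longrightarrow> P u"
    using assms(1) unfolding nearU_def by blast
  obtain G2 d2 where 2: "finite G2" "G2 \<subseteq> U" "d2 > 0" "\<forall>u\<in>K2. (\<forall>g\<in>G2. \<bar>innerU u g - innerU u0 g\<bar> < d2) \<longrightarrow> Q u"
    using assms(2) unfolding nearU_def by blast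
  show ?thesis unfolding nearU_def
  proof (intro exI[of _ "G1 \<union> G2"] exI[of _ "min d1 d2"] conjI ballI impI)
    fix u assume u: "u \<in> K2" and H: "\<forall>g\<in>G1 \<union> G2. \<bar>innerU u g - innerU u0 g\<bar> < min d1 d2"
    show "P u" using 1(4) u H by auto
    show "Q u" using 2(4) u H by auto
  qed (use 1 2 in auto)
qed

lemma nearU_mono:
  assumes "nearU u0 P" "\<And>u. u \<in> K2 \<Longrightarrow> P u \<Longrightarrow> Q u" shows "nearU u0 Q"
  using assms unfolding nearU_def by meson

lemma nearU_true: "nearU u0 (\<lambda>_. True)"
  unfolding nearU_def by (intro exI[of _ "{}"] exI[of _ 1]) auto

lemma nearU_ball:
  assumes "finite A" "\<And>a. a \<in> A \<Longrightarrow> nearU u0 (P a)"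
  shows "nearU u0 (\<lambda>u. \<forall>a\<in>A. P a u)"
  using assms
proof (induction A rule: finite_induct)
  case empty then show ?case by (simp add: nearU_true)
next
  case (insert x F)
  then have "nearU u0 (\<lambda>u. P x u \<and> (\<forall>a\<in>F. P a u))" by (intro nearU_conj) auto
  then show ?case by simp
qed

lemma nearU_inner:
  assumes "g \<in> U" "e > 0" shows "nearU u0 (\<lambda>u. \<bar>innerU u g - innerU u0 g\<bar> < e)"
  unfolding nearU_def using assms by (intro exI[of _ "{g}"] exI[of _ e]) auto

lemma K2_U: "K2 \<subseteq> U" by (auto simp: K2_def)

lemma openin_nbhd:
  assumes "finite Gs" "Gs \<subseteq> U"
  shows "openin weakU {u \<in> U. \<forall>g\<in>Gs. \<bar>innerU u g - c g\<bar> < \<delta>}"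
  using assms
proof (induction Gs rule: finite_induct)
  case empty
  then show ?case using openin_topspace[of weakU] by simp
next
  case (insert x F)
  have "openin weakU {u \<in> topspace weakU. innerU u x \<in> ball (c x) \<delta>}"
    using insert by (intro openin_continuous_map_preimage[OF cont_innerU]) auto
  then have o1: "openin weakU {u \<in> U. \<bar>innerU u x - c x\<bar> < \<delta>}"
    by (simp add: dist_real_def abs_minus_commute)
  have "{u \<in> U. \<forall>g\<in>insert x F. \<bar>innerU u g - c g\<bar> < \<delta>} =
        {u \<in> U. \<bar>innerU u x - c x\<bar> < \<delta>} \<inter> {u \<in> U. \<forall>g\<in>F. \<bar>innerU u g - c g\<bar> < \<delta>}" by auto
  then show ?case using o1 insert by (metis (no_types, lifting) openin_Int insert_subset)
qed

lemma nearU_cont: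
  fixes F :: "(real \<Rightarrow> real) \<times> (real \<Rightarrow> real) \<Rightarrow> 'b::metric_space"
  assumes H: "\<And>u0 e. u0 \<in> K2 \<Longrightarrow> e > 0 \<Longrightarrow> nearU u0 (\<lambda>u. dist (F u) (F u0) < e)"
  shows "continuous_map (subtopology weakU K2) euclidean F"
  unfolding continuous_map_def
proof (intro conjI allI impI)
  show "F \<in> topspace (subtopology weakU K2) \<rightarrow> topspace euclidean" by simp
  fix V :: "'b set" assume "openin euclidean V"
  then have oV: "open V" by simp
  show "openin (subtopology weakU K2) {x \<in> topspace (subtopology weakU K2). F x \<in> V}"
  proof (subst openin_subopen, intro ballI)
    fix x assume x: "x \<in> {x \<in> topspace (subtopology weakU K2). F x \<in> V}"
    then have xK: "x \<in> K2" and xV: "F x \<in> V" using K2_U by auto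
    obtain e where e: "e > 0" "ball (F x) e \<subseteq> V" using oV xV openE by blast
    obtain Gs \<delta> where G: "finite Gs" "Gs \<subseteq> U" "\<delta> > 0"
      "\<forall>u\<in>K2. (\<forall>g\<in>Gs. \<bar>innerU u g - innerU x g\<bar> < \<delta>) \<longrightarrow> dist (F u) (F x) < e"
      using H[OF xK e(1)] unfolding nearU_def by blast
    define W where "W = {u \<in> U. \<forall>g\<in>Gs. \<bar>innerU u g - innerU x g\<bar> < \<delta>}"
    have oW: "openin weakU W" unfolding W_def by (rule openin_nbhd[OF G(1,2)])
    show "\<exists>T. openin (subtopology weakU K2) T \<and> x \<in> T \<and> T \<subseteq> {x \<in> topspace (subtopology weakU K2). F x \<in> V}"
    proof (intro exI conjI)
      show "openin (subtopology weakU K2) (W \<inter> K2)" using oW by (auto simp: openin_subtopology)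
      show "x \<in> W \<inter> K2" using xK K2_U G(3) by (auto simp: W_def)
      show "W \<inter> K2 \<subseteq> {x \<in> topspace (subtopology weakU K2). F x \<in> V}"
      proof
        fix u assume u: "u \<in> W \<inter> K2"
        then have "dist (F u) (F x) < e" using G(4) by (auto simp: W_def)
        then have "F u \<in> V" using e(2) by (auto simp: dist_commute)
        then show "u \<in> {x \<in> topspace (subtopology weakU K2). F x \<in> V}" using u by (auto simp: W_def)
      qed
    qed
  qed
qed


lemma space_MT: "space MT = {0..T_end}" by simp

lemma sets_MT_sub: "S \<in> sets lebesgue \<Longrightarrow> S \<subseteq> {0..T_end} \<Longrightarrow> S \<in> sets MT"
  by (subst sets_restrict_space_iff) auto

lemma lebesgue_on_sub: assumes "r \<le> T_end" shows "lebesgue_on {0..r} = restrict_space MT {0..r}"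
proof -
  have "restrict_space MT {0..r} = lebesgue_on ({0..T_end} \<inter> {0..r})"
    by (rule restrict_restrict_space) auto
  also have "{0..T_end} \<inter> {0..r} = {0..r}" using assms by auto
  finally show ?thesis by simp
qed

lemma int_sub: fixes f :: "real \<Rightarrow> real" assumes "r \<le> T_end"
  shows "integral\<^sup>L (lebesgue_on {0..r}) f = integral\<^sup>L MT (\<lambda>t. indicator {0..r} t * f t)"
proof -
  have "integral\<^sup>L (lebesgue_on {0..r}) f = integral\<^sup>L (restrict_space MT {0..r}) f"
    using lebesgue_on_sub[OF assms] by simp
  also have "\<dots> = integral\<^sup>L MT (\<lambda>t. indicator {0..r} t *\<^sub>R f t)"
    by (rule integral_restrict_space) (auto intro: sets_MT_sub)
  finally show ?thesis by simp
qed

lemma bound_int: fixes f :: "real \<Rightarrow> real"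
  assumes f[measurable]: "f \<in> borel_measurable MT" and b: "AE t in MT. \<bar>f t\<bar> \<le> C" and S[measurable]: "S \<in> sets MT"
    and C: "0 \<le> C"
  shows "\<bar>integral\<^sup>L MT (\<lambda>t. indicator S t * f t)\<bar> \<le> C * measure MT S"
proof -
  interpret finite_measure MT by (rule finite_MT)
  have i1: "integrable MT (\<lambda>t. indicator S t * f t)"
  proof (rule integrable_const_bound[where B=C])
    show "AE x in MT. norm (indicator S x * f x) \<le> C" using b by eventually_elim (use C in \<open>auto simp: indicator_def\<close>)
  qed measurable
  have i2: "integrable MT (\<lambda>t. C * indicator S t)"
  proof (rule integrable_const_bound[where B="\<bar>C\<bar>"])
    show "AE x in MT. norm (C * indicator S x) \<le> \<bar>C\<bar>" by (auto simp: indicator_def)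
  qed measurable
  have "integral\<^sup>L MT (\<lambda>t. C * indicator S t) = C * measure MT S"
  proof -
    have sub: "S \<inter> {0..T_end} = S" using sets.sets_into_space[OF S] by auto
    show ?thesis using sub by simp
  qed
  moreover have "integral\<^sup>L MT (\<lambda>t. indicator S t * f t) \<le> integral\<^sup>L MT (\<lambda>t. C * indicator S t)"
    by (rule integral_mono_AE[OF i1 i2]) (use b in \<open>eventually_elim, auto simp: indicator_def\<close>)
  moreover have "integral\<^sup>L MT (\<lambda>t. - (indicator S t * f t)) \<le> integral\<^sup>L MT (\<lambda>t. C * indicator S t)"
    by (rule integral_mono_AE[OF integrable_minus[OF i1] i2]) (use b in \<open>eventually_elim, auto simp: indicator_def\<close>)
  moreover have "integral\<^sup>L MT (\<lambda>t. - (indicator S t * f t)) = - integral\<^sup>L MT (\<lambda>t. indicator S t * f t)"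
    by (rule Bochner_Integration.integral_minus)
  ultimately show ?thesis unfolding abs_le_iff by linarith
qed

lemma meas_Ioc: "0 \<le> a \<Longrightarrow> a \<le> b \<Longrightarrow> b \<le> T_end \<Longrightarrow> measure MT {a<..b} = b - a"
  by (subst measure_restrict_space) auto

lemma meas_Icc0: "0 \<le> b \<Longrightarrow> b \<le> T_end \<Longrightarrow> measure MT {0..b} = b"
  by (subst measure_restrict_space) auto

lemma lip_int: fixes f :: "real \<Rightarrow> real"
  assumes f[measurable]: "f \<in> borel_measurable MT" and b: "AE t in MT. \<bar>f t\<bar> \<le> C"
    and ab: "0 \<le> a" "a \<le> b" "b \<le> T_end" and C: "0 \<le> C"
  shows "\<bar>integral\<^sup>L (lebesgue_on {0..b}) f - integral\<^sup>L (lebesgue_on {0..a}) f\<bar> \<le> C * (b - a)"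
proof -
  interpret finite_measure MT by (rule finite_MT)
  have int: "integrable MT (\<lambda>t. indicator {0..r} t * f t)" if "r \<le> T_end" for r
  proof (rule integrable_const_bound[where B=C])
    show "AE x in MT. norm (indicator {0..r} x * f x) \<le> C" using b by eventually_elim (use C in \<open>auto simp: indicator_def\<close>)
    have "{0..r} \<in> sets MT" using that by (intro sets_MT_sub) auto
    then show "(\<lambda>t. indicator {0..r} t * f t) \<in> borel_measurable MT" by measurable
  qed
  have "integral\<^sup>L (lebesgue_on {0..b}) f - integral\<^sup>L (lebesgue_on {0..a}) f =
      integral\<^sup>L MT (\<lambda>t. indicator {0..b} t * f t) - integral\<^sup>L MT (\<lambda>t. indicator {0..a} t * f t)"
    using ab int_sub[of b f] int_sub[of a f] by (simp only:)
  also have "\<dots> = integral\<^sup>L MT (\<lambda>t. indicator {0..b} t * f t - indicator {0..a} t * f t)"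
    using ab by (intro Bochner_Integration.integral_diff[symmetric] int) auto
  also have "\<dots> = integral\<^sup>L MT (\<lambda>t. indicator {a<..b} t * f t)"
    using ab by (intro Bochner_Integration.integral_cong) (auto simp: indicator_def)
  finally have "\<bar>integral\<^sup>L (lebesgue_on {0..b}) f - integral\<^sup>L (lebesgue_on {0..a}) f\<bar>
      = \<bar>integral\<^sup>L MT (\<lambda>t. indicator {a<..b} t * f t)\<bar>" by simp
  also have "\<dots> \<le> C * measure MT {a<..b}"
  proof (rule bound_int[OF f b _ C])
    show "{a<..b} \<in> sets MT" using ab by (intro sets_MT_sub) auto
  qed
  also have "\<dots> = C * (b - a)" using ab by (simp add: meas_Ioc)
  finally show ?thesis .
qed

lemma bnd_int: fixes f :: "real \<Rightarrow> real"
  assumes f[measurable]: "f \<in> borel_measurable MT" and b: "AE t in MT. \<bar>f t\<bar> \<le> C"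
    and ab: "0 \<le> r" "r \<le> T_end" and C: "0 \<le> C"
  shows "\<bar>integral\<^sup>L (lebesgue_on {0..r}) f\<bar> \<le> C * r"
proof -
  have "\<bar>integral\<^sup>L (lebesgue_on {0..r}) f\<bar> = \<bar>integral\<^sup>L MT (\<lambda>t. indicator {0..r} t * f t)\<bar>"
    using ab int_sub[of r f] by (simp only:)
  also have "\<dots> \<le> C * measure MT {0..r}"
    using ab C by (intro bound_int f b sets_MT_sub) auto
  also have "\<dots> = C * r" using ab by (simp add: meas_Icc0)
  finally show ?thesis .
qed

definition Fint :: "(real \<Rightarrow> real) \<Rightarrow> real \<Rightarrow> real" where
  "Fint f r = integral\<^sup>L (lebesgue_on {0..r}) f"

lemma Fint_lip: fixes f :: "real \<Rightarrow> real"
  assumes f: "f \<in> borel_measurable MT" and b: "AE t in MT. \<bar>f t\<bar> \<le> C"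
    and "a \<in> {0..T_end}" "c \<in> {0..T_end}" and C: "0 \<le> C"
  shows "\<bar>Fint f c - Fint f a\<bar> \<le> C * \<bar>c - a\<bar>"
proof (cases "a \<le> c")
  case True
  then show ?thesis using lip_int[OF f b, of a c] assms C by (simp add: Fint_def)
next
  case False
  then show ?thesis using lip_int[OF f b, of c a] assms C by (simp add: Fint_def abs_minus_commute)
qed

lemma Fint_bnd: fixes f :: "real \<Rightarrow> real"
  assumes f: "f \<in> borel_measurable MT" and b: "AE t in MT. \<bar>f t\<bar> \<le> C" and C: "0 \<le> C"
    and "r \<in> {0..T_end}"
  shows "\<bar>Fint f r\<bar> \<le> C * T_end"
proof -
  have "\<bar>Fint f r\<bar> \<le> C * r" using bnd_int[OF f b, of r] assms C by (simp add: Fint_def)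
  also have "\<dots> \<le> C * T_end" using assms by (intro mult_left_mono) auto
  finally show ?thesis .
qed

lemma lip_cont:
  fixes F :: "real \<Rightarrow> real"
  assumes "\<And>a c. a \<in> S \<Longrightarrow> c \<in> S \<Longrightarrow> \<bar>F c - F a\<bar> \<le> C * \<bar>c - a\<bar>" "0 \<le> C"
  shows "continuous_on S F"
  unfolding continuous_on_iff
proof (intro ballI allI impI)
  fix x e :: real assume x: "x \<in> S" and e: "e > 0"
  show "\<exists>d>0. \<forall>x'\<in>S. dist x' x < d \<longrightarrow> dist (F x') (F x) < e"
  proof (intro exI[of _ "e / (C + 1)"] conjI ballI impI)
    show "e / (C + 1) > 0" using e assms(2) by simp
    fix x' assume x': "x' \<in> S" and d: "dist x' x < e / (C + 1)"
    have "dist (F x') (F x) \<le> C * dist x' x" using assms(1)[OF x x'] by (simp add: dist_real_def)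
    also have "\<dots> \<le> C * (e / (C + 1))" using d assms(2) by (intro mult_left_mono) auto
    also have "\<dots> < e" using e assms(2) by (simp add: field_simps)
    finally show "dist (F x') (F x) < e" .
  qed
qed

lemma Fint_cont: fixes f :: "real \<Rightarrow> real"
  assumes f: "f \<in> borel_measurable MT" and b: "AE t in MT. \<bar>f t\<bar> \<le> C" and C: "0 \<le> C"
  shows "continuous_on {0..T_end} (Fint f)"
  by (rule lip_cont[OF Fint_lip[OF f b _ _ C] C])

lemma cont_meas: "continuous_on {0..T_end} F \<Longrightarrow> F \<in> borel_measurable MT"
  by (rule continuous_imp_measurable_on_sets_lebesgue) auto

lemma Fint_meas: fixes f :: "real \<Rightarrow> real"
  assumes f: "f \<in> borel_measurable MT" and b: "AE t in MT. \<bar>f t\<bar> \<le> C" and C: "0 \<le> C"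
  shows "Fint f \<in> borel_measurable MT"
  by (rule cont_meas[OF Fint_cont[OF f b C]])

lemma sin_lip: "\<bar>sin (a::real) - sin b\<bar> \<le> \<bar>a - b\<bar>"
proof -
  have "\<bar>sin a - sin b\<bar> = 2 * \<bar>sin ((a - b) / 2)\<bar> * \<bar>cos ((a + b) / 2)\<bar>"
    by (simp add: sin_diff_sin abs_mult)
  also have "\<dots> \<le> 2 * \<bar>(a - b) / 2\<bar> * 1"
    by (intro mult_mono abs_sin_x_le_abs_x) auto
  finally show ?thesis by simp
qed

lemma cos_lip: "\<bar>cos (a::real) - cos b\<bar> \<le> \<bar>a - b\<bar>"
proof -
  have "\<bar>cos a - cos b\<bar> = 2 * \<bar>sin ((a + b) / 2)\<bar> * \<bar>sin ((b - a) / 2)\<bar>"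
    by (simp add: cos_diff_cos abs_mult)
  also have "\<dots> \<le> 2 * 1 * \<bar>(b - a) / 2\<bar>"
    by (intro mult_mono abs_sin_x_le_abs_x) auto
  finally show ?thesis by (simp add: abs_minus_commute)
qed


definition dU :: "(real \<Rightarrow> real) \<times> (real \<Rightarrow> real) \<Rightarrow> real \<Rightarrow> real" where "dU u = (\<lambda>s. fst u s - snd u s)"
definition sU :: "(real \<Rightarrow> real) \<times> (real \<Rightarrow> real) \<Rightarrow> real \<Rightarrow> real" where "sU u = (\<lambda>s. fst u s + snd u s)"
lemma Fint_eq: "Fint f = (\<lambda>r. integral\<^sup>L (lebesgue_on {0..r}) f)"
  by (rule ext) (simp add: Fint_def)

definition Iu where "Iu u = Fint (dU u)"
definition Jt :: "(real \<Rightarrow> real) \<Rightarrow> (real \<Rightarrow> real) \<times> (real \<Rightarrow> real) \<Rightarrow> real \<Rightarrow> real"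
  where "Jt trig u = Fint (\<lambda>s. sU u s * trig (G3 u s))"

lemma G3_eq: "G3 u t = pi / 2 + 0.2 * Fint (Iu u) t"
  by (simp add: G3_def Fint_eq Iu_def dU_def)

lemma h_eq: "h u = vector [-10 + Fint (Jt cos u) T_end, -10 + Fint (Jt sin u) T_end, G3 u T_end,
    Jt cos u T_end, Jt sin u T_end, 0.2 * Iu u T_end]"
  by (simp add: h_def Fint_eq Jt_def Iu_def dU_def sU_def)

lemma K2_AE: "u \<in> K2 \<Longrightarrow> AE t in MT. \<bar>fst u t\<bar> \<le> 0.8 \<and> \<bar>snd u t\<bar> \<le> 0.4"
  by (simp add: K2_def)

lemma K2_fst_meas[measurable]: "u \<in> K2 \<Longrightarrow> fst u \<in> borel_measurable MT"
  by (auto simp: K2_def U_def L2T_def)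
lemma K2_snd_meas[measurable]: "u \<in> K2 \<Longrightarrow> snd u \<in> borel_measurable MT"
  by (auto simp: K2_def U_def L2T_def)

lemma dU_meas: "u \<in> K2 \<Longrightarrow> dU u \<in> borel_measurable MT"
  unfolding dU_def by measurable
lemma sU_meas: "u \<in> K2 \<Longrightarrow> sU u \<in> borel_measurable MT"
  unfolding sU_def by measurable

lemma bnd_aux: fixes a b :: real assumes "\<bar>a\<bar> \<le> 0.8 \<and> \<bar>b\<bar> \<le> 0.4"
  shows "\<bar>a - b\<bar> \<le> 1.2" "\<bar>a + b\<bar> \<le> 1.2"
  using assms abs_triangle_ineq4[of a b] abs_triangle_ineq[of a b] by linarith+

lemma dU_bnd: assumes "u \<in> K2" shows "AE t in MT. \<bar>dU u t\<bar> \<le> 1.2"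
  using K2_AE[OF assms] by (rule eventually_mono) (unfold dU_def, erule bnd_aux(1))
lemma sU_bnd: assumes "u \<in> K2" shows "AE t in MT. \<bar>sU u t\<bar> \<le> 1.2"
  using K2_AE[OF assms] by (rule eventually_mono) (unfold sU_def, erule bnd_aux(2))

lemma Tpos: "0 < T_end" by (simp add: T_end_val)

lemma Iu_lip: "u \<in> K2 \<Longrightarrow> a \<in> {0..T_end} \<Longrightarrow> c \<in> {0..T_end} \<Longrightarrow> \<bar>Iu u c - Iu u a\<bar> \<le> 1.2 * \<bar>c - a\<bar>"
  unfolding Iu_def by (rule Fint_lip[OF dU_meas dU_bnd]) auto
lemma Iu_cont: "u \<in> K2 \<Longrightarrow> continuous_on {0..T_end} (Iu u)"
  unfolding Iu_def by (rule Fint_cont[OF dU_meas dU_bnd]) auto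
lemma Iu_meas: "u \<in> K2 \<Longrightarrow> Iu u \<in> borel_measurable MT"
  by (rule cont_meas[OF Iu_cont])
lemma Iu_bnd: "u \<in> K2 \<Longrightarrow> r \<in> {0..T_end} \<Longrightarrow> \<bar>Iu u r\<bar> \<le> 1.2 * T_end"
  unfolding Iu_def by (rule Fint_bnd[OF dU_meas dU_bnd]) auto
lemma Iu_bndAE: "u \<in> K2 \<Longrightarrow> AE t in MT. \<bar>Iu u t\<bar> \<le> 1.2 * T_end"
  by (rule AE_I2) (use Iu_bnd in auto)

lemma G3_lip: "u \<in> K2 \<Longrightarrow> a \<in> {0..T_end} \<Longrightarrow> c \<in> {0..T_end} \<Longrightarrow>
    \<bar>G3 u c - G3 u a\<bar> \<le> (0.2 * (1.2 * T_end)) * \<bar>c - a\<bar>"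
proof -
  assume u: "u \<in> K2" and ac: "a \<in> {0..T_end}" "c \<in> {0..T_end}"
  have "\<bar>Fint (Iu u) c - Fint (Iu u) a\<bar> \<le> (1.2 * T_end) * \<bar>c - a\<bar>"
    by (rule Fint_lip[OF Iu_meas[OF u] Iu_bndAE[OF u] ac]) (use Tpos in auto)
  have e: "G3 u c - G3 u a = 0.2 * (Fint (Iu u) c - Fint (Iu u) a)" by (simp add: G3_eq algebra_simps)
  have "\<bar>G3 u c - G3 u a\<bar> = 0.2 * \<bar>Fint (Iu u) c - Fint (Iu u) a\<bar>" unfolding e abs_mult by simp
  also have "\<dots> \<le> 0.2 * ((1.2 * T_end) * \<bar>c - a\<bar>)" by (rule mult_left_mono) (fact, simp)
  also have "\<dots> = (0.2 * (1.2 * T_end)) * \<bar>c - a\<bar>" by simp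
  finally show ?thesis .
qed

lemma G3_cont: "u \<in> K2 \<Longrightarrow> continuous_on {0..T_end} (G3 u)"
  by (rule lip_cont[OF G3_lip]) (use Tpos in auto)

locale trigfun =
  fixes trig :: "real \<Rightarrow> real"
  assumes trig_lip: "\<And>a b. \<bar>trig a - trig b\<bar> \<le> \<bar>a - b\<bar>"
    and trig_bnd: "\<And>a. \<bar>trig a\<bar> \<le> 1"
    and trig_cont: "\<And>S F. continuous_on S F \<Longrightarrow> continuous_on S (\<lambda>x::real. trig (F x))"
begin

lemma tg_meas: assumes "u \<in> K2" shows "(\<lambda>s. trig (G3 u s)) \<in> borel_measurable MT"
  by (rule cont_meas[OF trig_cont[OF G3_cont[OF assms]]])

lemma cU_meas: "u \<in> K2 \<Longrightarrow> (\<lambda>s. sU u s * trig (G3 u s)) \<in> borel_measurable MT"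
  using sU_meas tg_meas by (intro borel_measurable_times) auto

lemma cU_bnd: "u \<in> K2 \<Longrightarrow> AE t in MT. \<bar>sU u t * trig (G3 u t)\<bar> \<le> 1.2"
  using sU_bnd
proof (rule eventually_mono)
  fix t assume "\<bar>sU u t\<bar> \<le> 1.2"
  then have "\<bar>sU u t\<bar> * \<bar>trig (G3 u t)\<bar> \<le> 1.2 * 1" by (intro mult_mono trig_bnd) auto
  then show "\<bar>sU u t * trig (G3 u t)\<bar> \<le> 1.2" by (simp add: abs_mult)
qed

lemma Jt_lip: "u \<in> K2 \<Longrightarrow> a \<in> {0..T_end} \<Longrightarrow> c \<in> {0..T_end} \<Longrightarrow> \<bar>Jt trig u c - Jt trig u a\<bar> \<le> 1.2 * \<bar>c - a\<bar>"
  unfolding Jt_def by (rule Fint_lip[OF cU_meas cU_bnd]) auto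
lemma Jt_cont: "u \<in> K2 \<Longrightarrow> continuous_on {0..T_end} (Jt trig u)"
  unfolding Jt_def by (rule Fint_cont[OF cU_meas cU_bnd]) auto
lemma Jt_meas: "u \<in> K2 \<Longrightarrow> Jt trig u \<in> borel_measurable MT"
  by (rule cont_meas[OF Jt_cont])
lemma Jt_bndAE: "u \<in> K2 \<Longrightarrow> AE t in MT. \<bar>Jt trig u t\<bar> \<le> 1.2 * T_end"
  by (rule AE_I2) (use Fint_bnd[OF cU_meas cU_bnd] in \<open>auto simp: Jt_def\<close>)

end

interpretation tcos: trigfun cos
  by unfold_locales (simp_all add: cos_lip continuous_on_cos)
interpretation tsin: trigfun sin
  by unfold_locales (simp_all add: sin_lip continuous_on_sin)


lemma bnd_L2T: fixes f :: "real \<Rightarrow> real"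
  assumes f: "f \<in> borel_measurable MT" and b: "\<And>t. \<bar>f t\<bar> \<le> B" shows "f \<in> L2T"
proof -
  interpret finite_measure MT by (rule finite_MT)
  have "integrable MT (\<lambda>t. (f t)\<^sup>2)"
  proof (rule integrable_const_bound[where B="B\<^sup>2"])
    show "AE x in MT. norm ((f x)\<^sup>2) \<le> B\<^sup>2"
    proof (rule AE_I2)
      fix x have "\<bar>f x\<bar>\<^sup>2 \<le> B\<^sup>2" using b[of x] by (intro power_mono) auto
      then show "norm ((f x)\<^sup>2) \<le> B\<^sup>2" by simp
    qed
    show "(\<lambda>t. (f t)\<^sup>2) \<in> borel_measurable MT" using f by measurable
  qed
  then show ?thesis using f by (simp add: L2T_def)
qed

lemma ind_meas: "r \<le> T_end \<Longrightarrow> indicator {0..r} \<in> borel_measurable MT"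
  by (rule borel_measurable_indicator) (rule sets_MT_sub, auto)

lemma int_ind: fixes f :: "real \<Rightarrow> real"
  assumes f: "f \<in> borel_measurable MT" and b: "AE t in MT. \<bar>f t\<bar> \<le> C" and C: "0 \<le> C" and r: "r \<le> T_end"
  shows "integrable MT (\<lambda>t. indicator {0..r} t * f t)"
proof -
  interpret finite_measure MT by (rule finite_MT)
  show ?thesis
  proof (rule integrable_const_bound[where B=C])
    show "AE x in MT. norm (indicator {0..r} x * f x) \<le> C" using b by eventually_elim (use C in \<open>auto simp: indicator_def\<close>)
    show "(\<lambda>t. indicator {0..r} t * f t) \<in> borel_measurable MT"
      using ind_meas[OF r] f by (rule borel_measurable_times)
  qed
qed

lemma Fint_diff: fixes f g :: "real \<Rightarrow> real"
  assumes f: "f \<in> borel_measurable MT" "AE t in MT. \<bar>f t\<bar> \<le> C"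
    and g: "g \<in> borel_measurable MT" "AE t in MT. \<bar>g t\<bar> \<le> C" and C: "0 \<le> C" and r: "r \<le> T_end"
  shows "Fint f r - Fint g r = Fint (\<lambda>t. f t - g t) r"
proof -
  have "Fint f r - Fint g r = integral\<^sup>L MT (\<lambda>t. indicator {0..r} t * f t) - integral\<^sup>L MT (\<lambda>t. indicator {0..r} t * g t)"
    using int_sub[OF r, of f] int_sub[OF r, of g] by (simp only: Fint_def)
  also have "\<dots> = integral\<^sup>L MT (\<lambda>t. indicator {0..r} t * f t - indicator {0..r} t * g t)"
    by (rule Bochner_Integration.integral_diff[symmetric]) (rule int_ind[OF f C r], rule int_ind[OF g C r])
  also have "\<dots> = integral\<^sup>L MT (\<lambda>t. indicator {0..r} t * (f t - g t))" by (simp add: algebra_simps)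
  also have "\<dots> = Fint (\<lambda>t. f t - g t) r" using int_sub[OF r, of "\<lambda>t. f t - g t"] by (simp only: Fint_def)
  finally show ?thesis .
qed

lemma Fint_cong: "(\<And>t. f t = g t) \<Longrightarrow> Fint f r = Fint g r" by (metis ext)

definition gI :: "real \<Rightarrow> (real \<Rightarrow> real) \<times> (real \<Rightarrow> real)" where
  "gI r = (\<lambda>s. indicator {0..r} s, \<lambda>s. - indicator {0..r} s)"

lemma gI_U: assumes "r \<le> T_end" shows "gI r \<in> U"
proof -
  have m: "indicator {0..r} \<in> borel_measurable MT" by (rule ind_meas[OF assms])
  have 1: "(\<lambda>s. indicator {0..r} s :: real) \<in> L2T" by (rule bnd_L2T[OF m, of 1]) (simp add: indicator_def)
  have 2: "(\<lambda>s. - indicator {0..r} s :: real) \<in> L2T"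
    by (rule bnd_L2T[OF borel_measurable_uminus[OF m], of 1]) (simp add: indicator_def)
  show ?thesis using 1 2 by (simp add: gI_def U_def)
qed

lemma inner_gI: assumes "r \<le> T_end" shows "innerU u (gI r) = Iu u r"
proof -
  have "innerU u (gI r) = integral\<^sup>L MT (\<lambda>t. indicator {0..r} t * dU u t)"
    unfolding innerU_def gI_def dU_def by (simp add: algebra_simps)
  also have "\<dots> = Iu u r" using int_sub[OF assms, of "dU u"] by (simp add: Iu_def Fint_def)
  finally show ?thesis .
qed

lemma near_Iu: assumes "r \<in> {0..T_end}" "e > 0" shows "nearU u0 (\<lambda>u. \<bar>Iu u r - Iu u0 r\<bar> < e)"
proof (rule nearU_mono[OF nearU_inner[OF gI_U assms(2)]])
  show "r \<le> T_end" using assms by simp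
  fix u assume "\<bar>innerU u (gI r) - innerU u0 (gI r)\<bar> < e"
  then show "\<bar>Iu u r - Iu u0 r\<bar> < e" using assms by (simp add: inner_gI)
qed

lemma grid:
  fixes Fu :: "(real \<Rightarrow> real) \<times> (real \<Rightarrow> real) \<Rightarrow> real \<Rightarrow> real"
  assumes lip: "\<And>u a c. u \<in> K2 \<Longrightarrow> a \<in> {0..T_end} \<Longrightarrow> c \<in> {0..T_end} \<Longrightarrow> \<bar>Fu u c - Fu u a\<bar> \<le> L * \<bar>c - a\<bar>"
    and L: "0 \<le> L" and u0: "u0 \<in> K2"
    and pt: "\<And>r e. r \<in> {0..T_end} \<Longrightarrow> e > 0 \<Longrightarrow> nearU u0 (\<lambda>u. \<bar>Fu u r - Fu u0 r\<bar> < e)"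
    and e: "e > 0"
  shows "nearU u0 (\<lambda>u. \<forall>r\<in>{0..T_end}. \<bar>Fu u r - Fu u0 r\<bar> \<le> e)"
proof -
  have T: "0 < T_end" by (rule Tpos)
  obtain N :: nat where N: "4 * L * T_end / e < real N" using reals_Archimedean2 by blast
  have "0 \<le> 4 * L * T_end / e" using L T e by simp
  then have Npos: "0 < real N" using N by linarith
  have Lh: "L * (T_end / real N) \<le> e / 4"
  proof -
    have "4 * L * T_end < e * real N" using N e by (simp add: field_simps)
    then show ?thesis using Npos by (simp add: field_simps)
  qed
  define P where "P = (\<lambda>j::nat. T_end * real j / real N) ` {0..N}"
  have Psub: "P \<subseteq> {0..T_end}"
  proof
    fix p assume "p \<in> P"
    then obtain j where j: "j \<le> N" "p = T_end * real j / real N" by (auto simp: P_def)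
    have "real j \<le> real N" using j by simp
    then have "T_end * real j / real N \<le> T_end" using T Npos by (simp add: field_simps)
    then show "p \<in> {0..T_end}" using j T Npos by simp
  qed
  have "nearU u0 (\<lambda>u. \<forall>p\<in>P. \<bar>Fu u p - Fu u0 p\<bar> < e / 2)"
  proof (rule nearU_ball)
    show "finite P" by (simp add: P_def)
    fix p assume "p \<in> P"
    then have "p \<in> {0..T_end}" using Psub by blast
    then show "nearU u0 (\<lambda>u. \<bar>Fu u p - Fu u0 p\<bar> < e / 2)" by (rule pt) (use e in simp)
  qed
  then show ?thesis
  proof (rule nearU_mono)
    fix u assume u: "u \<in> K2" and H: "\<forall>p\<in>P. \<bar>Fu u p - Fu u0 p\<bar> < e / 2"
    show "\<forall>r\<in>{0..T_end}. \<bar>Fu u r - Fu u0 r\<bar> \<le> e"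
    proof
      fix r assume r: "r \<in> {0..T_end}"
      define x where "x = r * real N / T_end"
      have x0: "0 \<le> x" using r T Npos by (simp add: x_def)
      have xN: "x \<le> real N" using r T Npos by (simp add: x_def field_simps)
      define k where "k = nat \<lfloor>x\<rfloor>"
      have kx: "real k \<le> x" "x < real k + 1" using x0 by (auto simp: k_def of_nat_nat)
      have kN: "k \<le> N" using kx(1) xN by linarith
      define p where "p = T_end * real k / real N"
      have pP: "p \<in> P" using kN by (auto simp: P_def p_def)
      have p: "p \<in> {0..T_end}" using pP Psub by blast
      have rp: "r - p = (T_end / real N) * (x - real k)" using T Npos by (simp add: x_def p_def field_simps)
      have dist: "\<bar>r - p\<bar> \<le> T_end / real N"
      proof -
        have "0 \<le> x - real k" "x - real k \<le> 1" using kx by linarith+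
        then have "\<bar>x - real k\<bar> \<le> 1" by simp
        then have "(T_end / real N) * \<bar>x - real k\<bar> \<le> (T_end / real N) * 1" using T Npos by (intro mult_left_mono) auto
        then show ?thesis unfolding rp abs_mult using T Npos by simp
      qed
      have a: "\<bar>Fu u r - Fu u p\<bar> \<le> e / 4"
      proof -
        have "\<bar>Fu u r - Fu u p\<bar> \<le> L * \<bar>r - p\<bar>" using lip[OF u p r] .
        also have "\<dots> \<le> L * (T_end / real N)" using dist L by (intro mult_left_mono) auto
        finally show ?thesis using Lh by linarith
      qed
      have b: "\<bar>Fu u0 p - Fu u0 r\<bar> \<le> e / 4"
      proof -
        have "\<bar>Fu u0 p - Fu u0 r\<bar> \<le> L * \<bar>p - r\<bar>" using lip[OF u0 r p] .
        also have "\<dots> \<le> L * (T_end / real N)" using dist L by (intro mult_left_mono) (auto simp: abs_minus_commute)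
        finally show ?thesis using Lh by linarith
      qed
      have c: "\<bar>Fu u p - Fu u0 p\<bar> < e / 2" using H pP by blast
      have "\<bar>Fu u r - Fu u0 r\<bar> \<le> \<bar>Fu u r - Fu u p\<bar> + \<bar>Fu u p - Fu u0 p\<bar> + \<bar>Fu u0 p - Fu u0 r\<bar>" by linarith
      then show "\<bar>Fu u r - Fu u0 r\<bar> \<le> e" using a b c by linarith
    qed
  qed
qed


lemma near_G3: assumes u0: "u0 \<in> K2" and e: "e > 0"
  shows "nearU u0 (\<lambda>u. \<forall>s\<in>{0..T_end}. \<bar>G3 u s - G3 u0 s\<bar> \<le> e)"
proof -
  have T: "0 < T_end" by (rule Tpos)
  define \<eta> where "\<eta> = e / (0.2 * T_end)"
  have \<eta>: "\<eta> > 0" using e T by (simp add: \<eta>_def)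
  have "nearU u0 (\<lambda>u. \<forall>r\<in>{0..T_end}. \<bar>Iu u r - Iu u0 r\<bar> \<le> \<eta>)"
    by (rule grid[OF Iu_lip _ u0 near_Iu \<eta>]) auto
  then show ?thesis
  proof (rule nearU_mono)
    fix u assume u: "u \<in> K2" and H: "\<forall>r\<in>{0..T_end}. \<bar>Iu u r - Iu u0 r\<bar> \<le> \<eta>"
    show "\<forall>s\<in>{0..T_end}. \<bar>G3 u s - G3 u0 s\<bar> \<le> e"
    proof
      fix s assume s: "s \<in> {0..T_end}"
      have C: "0 \<le> 1.2 * T_end" using T by simp
      have "Fint (Iu u) s - Fint (Iu u0) s = Fint (\<lambda>t. Iu u t - Iu u0 t) s"
        by (rule Fint_diff[OF Iu_meas[OF u] Iu_bndAE[OF u] Iu_meas[OF u0] Iu_bndAE[OF u0] C]) (use s in simp)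
      moreover have "\<bar>Fint (\<lambda>t. Iu u t - Iu u0 t) s\<bar> \<le> \<eta> * s"
        unfolding Fint_def
      proof (rule bnd_int)
        show "(\<lambda>t. Iu u t - Iu u0 t) \<in> borel_measurable MT"
          using Iu_meas[OF u] Iu_meas[OF u0] by (rule borel_measurable_diff)
        show "AE t in MT. \<bar>Iu u t - Iu u0 t\<bar> \<le> \<eta>" using H by (intro AE_I2) auto
      qed (use s \<eta> in auto)
      moreover have "\<eta> * s \<le> \<eta> * T_end" using s \<eta> by (intro mult_left_mono) auto
      moreover have "G3 u s - G3 u0 s = 0.2 * (Fint (Iu u) s - Fint (Iu u0) s)" by (simp add: G3_eq algebra_simps)
      moreover have "0.2 * (\<eta> * T_end) = e" using T by (simp add: \<eta>_def)
      ultimately show "\<bar>G3 u s - G3 u0 s\<bar> \<le> e" by (simp add: abs_mult)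
    qed
  qed
qed

context trigfun
begin

definition gJ where "gJ u0 r = (\<lambda>s. indicator {0..r} s * trig (G3 u0 s), \<lambda>s. indicator {0..r} s * trig (G3 u0 s))"

lemma gJ_U: assumes "u0 \<in> K2" "r \<le> T_end" shows "gJ u0 r \<in> U"
proof -
  have m: "(\<lambda>s. indicator {0..r} s * trig (G3 u0 s)) \<in> borel_measurable MT"
    using ind_meas[OF assms(2)] tg_meas[OF assms(1)] by (rule borel_measurable_times)
  have "(\<lambda>s. indicator {0..r} s * trig (G3 u0 s)) \<in> L2T"
  proof (rule bnd_L2T[OF m, of 1])
    fix t show "\<bar>indicator {0..r} t * trig (G3 u0 t)\<bar> \<le> 1"
      using trig_bnd[of "G3 u0 t"] by (simp add: indicator_def abs_mult)
  qed
  then show ?thesis by (simp add: gJ_def U_def)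
qed

lemma inner_gJ: assumes "r \<le> T_end"
  shows "innerU u (gJ u0 r) = Fint (\<lambda>s. sU u s * trig (G3 u0 s)) r"
proof -
  have "innerU u (gJ u0 r) = integral\<^sup>L MT (\<lambda>t. indicator {0..r} t * (sU u t * trig (G3 u0 t)))"
    unfolding innerU_def gJ_def sU_def by (simp add: algebra_simps)
  also have "\<dots> = Fint (\<lambda>s. sU u s * trig (G3 u0 s)) r"
    using int_sub[OF assms, of "\<lambda>s. sU u s * trig (G3 u0 s)"] by (simp add: Fint_def)
  finally show ?thesis .
qed

lemma mix_meas: "u \<in> K2 \<Longrightarrow> u0 \<in> K2 \<Longrightarrow> (\<lambda>s. sU u s * trig (G3 u0 s)) \<in> borel_measurable MT"
  using sU_meas tg_meas by (intro borel_measurable_times) auto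

lemma mix_bnd: assumes "u \<in> K2" shows "AE t in MT. \<bar>sU u t * trig (G3 u0 t)\<bar> \<le> 1.2"
  using sU_bnd[OF assms]
proof (rule eventually_mono)
  fix t assume "\<bar>sU u t\<bar> \<le> 1.2"
  then have "\<bar>sU u t\<bar> * \<bar>trig (G3 u0 t)\<bar> \<le> 1.2 * 1" by (intro mult_mono trig_bnd) auto
  then show "\<bar>sU u t * trig (G3 u0 t)\<bar> \<le> 1.2" by (simp add: abs_mult)
qed

lemma near_Jpt: assumes u0: "u0 \<in> K2" and r: "r \<in> {0..T_end}" and e: "e > 0"
  shows "nearU u0 (\<lambda>u. \<bar>Jt trig u r - Jt trig u0 r\<bar> < e)"
proof -
  have T: "0 < T_end" by (rule Tpos)
  define \<eta> where "\<eta> = e / (4 * 1.2 * T_end)"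
  have \<eta>: "\<eta> > 0" using e T by (simp add: \<eta>_def)
  have e2: "e / 2 > 0" using e by simp
  have rT: "r \<le> T_end" using r by simp
  have "nearU u0 (\<lambda>u. (\<forall>s\<in>{0..T_end}. \<bar>G3 u s - G3 u0 s\<bar> \<le> \<eta>) \<and>
        \<bar>innerU u (gJ u0 r) - innerU u0 (gJ u0 r)\<bar> < e / 2)"
    by (intro nearU_conj near_G3[OF u0 \<eta>] nearU_inner[OF gJ_U[OF u0 rT] e2])
  then show ?thesis
  proof (rule nearU_mono)
    fix u assume u: "u \<in> K2" and H: "(\<forall>s\<in>{0..T_end}. \<bar>G3 u s - G3 u0 s\<bar> \<le> \<eta>) \<and>
        \<bar>innerU u (gJ u0 r) - innerU u0 (gJ u0 r)\<bar> < e / 2"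
    have C: "(0::real) \<le> 1.2" by simp
    have A: "Jt trig u r - Fint (\<lambda>s. sU u s * trig (G3 u0 s)) r = Fint (\<lambda>s. sU u s * (trig (G3 u s) - trig (G3 u0 s))) r"
    proof -
      have "Jt trig u r - Fint (\<lambda>s. sU u s * trig (G3 u0 s)) r =
          Fint (\<lambda>s. sU u s * trig (G3 u s) - sU u s * trig (G3 u0 s)) r"
        unfolding Jt_def by (rule Fint_diff[OF cU_meas[OF u] cU_bnd[OF u] mix_meas[OF u u0] mix_bnd[OF u] C rT])
      also have "\<dots> = Fint (\<lambda>s. sU u s * (trig (G3 u s) - trig (G3 u0 s))) r"
        by (rule Fint_cong) (simp add: algebra_simps)
      finally show ?thesis .
    qed
    have Abnd: "\<bar>Fint (\<lambda>s. sU u s * (trig (G3 u s) - trig (G3 u0 s))) r\<bar> \<le> (1.2 * \<eta>) * r"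
      unfolding Fint_def
    proof (rule bnd_int)
      show "(\<lambda>s. sU u s * (trig (G3 u s) - trig (G3 u0 s))) \<in> borel_measurable MT"
        using sU_meas[OF u] tg_meas[OF u] tg_meas[OF u0] by measurable
      have G: "AE t in MT. \<bar>trig (G3 u t) - trig (G3 u0 t)\<bar> \<le> \<eta>"
      proof (rule AE_I2)
        fix t assume "t \<in> space MT"
        then have "\<bar>G3 u t - G3 u0 t\<bar> \<le> \<eta>" using H by auto
        then show "\<bar>trig (G3 u t) - trig (G3 u0 t)\<bar> \<le> \<eta>" using trig_lip[of "G3 u t" "G3 u0 t"] by linarith
      qed
      show "AE t in MT. \<bar>sU u t * (trig (G3 u t) - trig (G3 u0 t))\<bar> \<le> 1.2 * \<eta>"
        using sU_bnd[OF u] G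
      proof eventually_elim
        case (elim t)
        then show ?case unfolding abs_mult by (intro mult_mono) auto
      qed
    qed (use r \<eta> in auto)
    have "(1.2 * \<eta>) * r \<le> (1.2 * \<eta>) * T_end" using r \<eta> by (intro mult_left_mono) auto
    also have "\<dots> = e / 4" using T by (simp add: \<eta>_def)
    finally have Ab: "\<bar>Jt trig u r - Fint (\<lambda>s. sU u s * trig (G3 u0 s)) r\<bar> \<le> e / 4" using A Abnd by simp
    have B: "Fint (\<lambda>s. sU u s * trig (G3 u0 s)) r - Jt trig u0 r = innerU u (gJ u0 r) - innerU u0 (gJ u0 r)"
      using inner_gJ[OF rT] by (simp add: Jt_def)
    show "\<bar>Jt trig u r - Jt trig u0 r\<bar> < e"
      using Ab B H e by linarith
  qed
qed

lemma near_Jint: assumes u0: "u0 \<in> K2" and e: "e > 0"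
  shows "nearU u0 (\<lambda>u. \<bar>Fint (Jt trig u) T_end - Fint (Jt trig u0) T_end\<bar> < e)"
proof -
  have T: "0 < T_end" by (rule Tpos)
  define \<eta> where "\<eta> = e / (2 * T_end)"
  have \<eta>: "\<eta> > 0" using e T by (simp add: \<eta>_def)
  have "nearU u0 (\<lambda>u. \<forall>r\<in>{0..T_end}. \<bar>Jt trig u r - Jt trig u0 r\<bar> \<le> \<eta>)"
    by (rule grid[OF Jt_lip _ u0 near_Jpt[OF u0] \<eta>]) auto
  then show ?thesis
  proof (rule nearU_mono)
    fix u assume u: "u \<in> K2" and H: "\<forall>r\<in>{0..T_end}. \<bar>Jt trig u r - Jt trig u0 r\<bar> \<le> \<eta>"
    have C: "0 \<le> 1.2 * T_end" using T by simp
    have "Fint (Jt trig u) T_end - Fint (Jt trig u0) T_end = Fint (\<lambda>t. Jt trig u t - Jt trig u0 t) T_end"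
      by (rule Fint_diff[OF Jt_meas[OF u] Jt_bndAE[OF u] Jt_meas[OF u0] Jt_bndAE[OF u0] C]) simp
    moreover have "\<bar>Fint (\<lambda>t. Jt trig u t - Jt trig u0 t) T_end\<bar> \<le> \<eta> * T_end"
      unfolding Fint_def
    proof (rule bnd_int)
      show "(\<lambda>t. Jt trig u t - Jt trig u0 t) \<in> borel_measurable MT"
        using Jt_meas[OF u] Jt_meas[OF u0] by (rule borel_measurable_diff)
      show "AE t in MT. \<bar>Jt trig u t - Jt trig u0 t\<bar> \<le> \<eta>" using H by (intro AE_I2) auto
    qed (use T \<eta> in auto)
    moreover have "\<eta> * T_end = e / 2" using T by (simp add: \<eta>_def)
    ultimately show "\<bar>Fint (Jt trig u) T_end - Fint (Jt trig u0) T_end\<bar> < e" using e by linarith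
  qed
qed

lemma near_JT: assumes u0: "u0 \<in> K2" and e: "e > 0"
  shows "nearU u0 (\<lambda>u. \<bar>Jt trig u T_end - Jt trig u0 T_end\<bar> < e)"
  by (rule near_Jpt[OF u0 _ e]) (use Tpos in simp)

end

lemma vec6_comp: "\<bar>(vector [a1,a2,a3,a4,a5,a6] - vector [b1,b2,b3,b4,b5,b6] :: real^6) $ i\<bar>
   \<le> \<bar>a1-b1\<bar> + \<bar>a2-b2\<bar> + \<bar>a3-b3\<bar> + \<bar>a4-b4\<bar> + \<bar>a5-b5\<bar> + \<bar>a6-b6\<bar>"
  unfolding vector_def by (auto simp: fun_upd_def)

lemma vec6_norm: "norm (vector [a1,a2,a3,a4,a5,a6] - vector [b1,b2,b3,b4,b5,b6] :: real^6)
   \<le> 6 * (\<bar>a1-b1\<bar> + \<bar>a2-b2\<bar> + \<bar>a3-b3\<bar> + \<bar>a4-b4\<bar> + \<bar>a5-b5\<bar> + \<bar>a6-b6\<bar>)"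
proof -
  have "norm (vector [a1,a2,a3,a4,a5,a6] - vector [b1,b2,b3,b4,b5,b6] :: real^6) \<le>
     (\<Sum>i\<in>UNIV. \<bar>(vector [a1,a2,a3,a4,a5,a6] - vector [b1,b2,b3,b4,b5,b6] :: real^6) $ i\<bar>)"
    by (rule norm_le_l1_cart)
  also have "\<dots> \<le> (\<Sum>i\<in>(UNIV::6 set). \<bar>a1-b1\<bar> + \<bar>a2-b2\<bar> + \<bar>a3-b3\<bar> + \<bar>a4-b4\<bar> + \<bar>a5-b5\<bar> + \<bar>a6-b6\<bar>)"
    by (rule sum_mono) (rule vec6_comp)
  also have "\<dots> = 6 * (\<bar>a1-b1\<bar> + \<bar>a2-b2\<bar> + \<bar>a3-b3\<bar> + \<bar>a4-b4\<bar> + \<bar>a5-b5\<bar> + \<bar>a6-b6\<bar>)" by simp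
  finally show ?thesis .
qed

lemma near_h: assumes u0: "u0 \<in> K2" and e: "e > 0"
  shows "nearU u0 (\<lambda>u. dist (h u) (h u0) < e)"
proof -
  define \<epsilon> where "\<epsilon> = e / 37"
  have \<epsilon>: "\<epsilon> > 0" using e by (simp add: \<epsilon>_def)
  have G: "nearU u0 (\<lambda>u. \<bar>G3 u T_end - G3 u0 T_end\<bar> < \<epsilon>)"
  proof (rule nearU_mono[OF near_G3[OF u0, of "\<epsilon> / 2"]])
    show "\<epsilon> / 2 > 0" using \<epsilon> by simp
    fix u assume "\<forall>s\<in>{0..T_end}. \<bar>G3 u s - G3 u0 s\<bar> \<le> \<epsilon> / 2"
    then have "\<bar>G3 u T_end - G3 u0 T_end\<bar> \<le> \<epsilon> / 2" using Tpos by simp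
    then show "\<bar>G3 u T_end - G3 u0 T_end\<bar> < \<epsilon>" using \<epsilon> by linarith
  qed
  have I: "nearU u0 (\<lambda>u. \<bar>Iu u T_end - Iu u0 T_end\<bar> < \<epsilon>)"
    by (rule near_Iu[OF _ \<epsilon>]) (use Tpos in simp)
  have "nearU u0 (\<lambda>u. \<bar>Fint (Jt cos u) T_end - Fint (Jt cos u0) T_end\<bar> < \<epsilon> \<and>
      \<bar>Fint (Jt sin u) T_end - Fint (Jt sin u0) T_end\<bar> < \<epsilon> \<and>
      \<bar>G3 u T_end - G3 u0 T_end\<bar> < \<epsilon> \<and>
      \<bar>Jt cos u T_end - Jt cos u0 T_end\<bar> < \<epsilon> \<and>
      \<bar>Jt sin u T_end - Jt sin u0 T_end\<bar> < \<epsilon> \<and>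
      \<bar>Iu u T_end - Iu u0 T_end\<bar> < \<epsilon>)"
    by (intro nearU_conj tcos.near_Jint[OF u0 \<epsilon>] tsin.near_Jint[OF u0 \<epsilon>] G
        tcos.near_JT[OF u0 \<epsilon>] tsin.near_JT[OF u0 \<epsilon>] I)
  then show ?thesis
  proof (rule nearU_mono)
    fix u assume H: "\<bar>Fint (Jt cos u) T_end - Fint (Jt cos u0) T_end\<bar> < \<epsilon> \<and>
      \<bar>Fint (Jt sin u) T_end - Fint (Jt sin u0) T_end\<bar> < \<epsilon> \<and>
      \<bar>G3 u T_end - G3 u0 T_end\<bar> < \<epsilon> \<and>
      \<bar>Jt cos u T_end - Jt cos u0 T_end\<bar> < \<epsilon> \<and>
      \<bar>Jt sin u T_end - Jt sin u0 T_end\<bar> < \<epsilon> \<and>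
      \<bar>Iu u T_end - Iu u0 T_end\<bar> < \<epsilon>"
    have six: "\<bar>0.2 * Iu u T_end - 0.2 * Iu u0 T_end\<bar> \<le> \<bar>Iu u T_end - Iu u0 T_end\<bar>"
    proof -
      have eq: "0.2 * Iu u T_end - 0.2 * Iu u0 T_end = 0.2 * (Iu u T_end - Iu u0 T_end)" by (simp add: algebra_simps)
      have "\<bar>0.2 * Iu u T_end - 0.2 * Iu u0 T_end\<bar> = 0.2 * \<bar>Iu u T_end - Iu u0 T_end\<bar>"
        unfolding eq abs_mult by simp
      then show ?thesis by simp
    qed
    have "dist (h u) (h u0) = norm (h u - h u0)" by (simp add: dist_norm)
    also have "\<dots> \<le> 6 * (\<bar>(-10 + Fint (Jt cos u) T_end) - (-10 + Fint (Jt cos u0) T_end)\<bar>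
        + \<bar>(-10 + Fint (Jt sin u) T_end) - (-10 + Fint (Jt sin u0) T_end)\<bar>
        + \<bar>G3 u T_end - G3 u0 T_end\<bar> + \<bar>Jt cos u T_end - Jt cos u0 T_end\<bar>
        + \<bar>Jt sin u T_end - Jt sin u0 T_end\<bar> + \<bar>0.2 * Iu u T_end - 0.2 * Iu u0 T_end\<bar>)"
      unfolding h_eq by (rule vec6_norm)
    also have "\<dots> < 6 * (6 * \<epsilon>)" using H six by simp
    also have "\<dots> < e" using e by (simp add: \<epsilon>_def)
    finally show "dist (h u) (h u0) < e" .
  qed
qed

lemma h_cont: "continuous_map (subtopology weakU K2) euclidean h"
  by (rule nearU_cont) (rule near_h)


lemma mult_abs_aux: fixes a b c :: real shows "\<bar>a\<bar> \<le> c \<Longrightarrow> a * b \<le> c * \<bar>b\<bar>"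
proof -
  assume "\<bar>a\<bar> \<le> c"
  have "a * b \<le> \<bar>a * b\<bar>" by simp
  also have "\<dots> = \<bar>a\<bar> * \<bar>b\<bar>" by (simp add: abs_mult)
  also have "\<dots> \<le> c * \<bar>b\<bar>" using \<open>\<bar>a\<bar> \<le> c\<close> by (intro mult_right_mono) auto
  finally show ?thesis .
qed

lemma ae_bound_from_ineq:
  fixes v :: "real \<Rightarrow> real"
  assumes v: "v \<in> L2T" and c: "0 \<le> c"
    and H: "\<And>w. w \<in> L2T \<Longrightarrow> integral\<^sup>L MT (\<lambda>t. v t * w t) \<le> integral\<^sup>L MT (\<lambda>t. c * \<bar>w t\<bar>)"
  shows "AE t in MT. \<bar>v t\<bar> \<le> c"
proof -
  have vm[measurable]: "v \<in> borel_measurable MT" using v by (rule L2T_meas)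
  define w where "w t = (if c < \<bar>v t\<bar> then sgn (v t) else 0)" for t
  have wm[measurable]: "w \<in> borel_measurable MT" unfolding w_def by measurable
  have wL: "w \<in> L2T" by (rule bnd_L2T[OF wm, of 1]) (auto simp: w_def sgn_real_def)
  define \<phi> where "\<phi> t = (if c < \<bar>v t\<bar> then \<bar>v t\<bar> - c else 0)" for t
  have phi_eq: "\<phi> t = v t * w t - c * \<bar>w t\<bar>" for t
    using c by (auto simp: \<phi>_def w_def sgn_real_def)
  have i1: "integrable MT (\<lambda>t. v t * w t)" by (rule L2T_mult[OF v wL])
  have i2: "integrable MT (\<lambda>t. c * \<bar>w t\<bar>)" using L2T_integrable[OF L2T_abs[OF wL]] by simp
  have iphi: "integrable MT \<phi>" unfolding phi_eq using i1 i2 by simp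
  have "integral\<^sup>L MT \<phi> = integral\<^sup>L MT (\<lambda>t. v t * w t) - integral\<^sup>L MT (\<lambda>t. c * \<bar>w t\<bar>)"
    unfolding phi_eq by (rule Bochner_Integration.integral_diff[OF i1 i2])
  also have "\<dots> \<le> 0" using H[OF wL] by simp
  finally have le: "integral\<^sup>L MT \<phi> \<le> 0" .
  have nn: "AE t in MT. 0 \<le> \<phi> t" by (auto simp: \<phi>_def)
  have "0 \<le> integral\<^sup>L MT \<phi>" using nn by (rule integral_nonneg_AE)
  then have "integral\<^sup>L MT \<phi> = 0" using le by simp
  then have "AE t in MT. \<phi> t = 0" using integral_nonneg_eq_0_iff_AE[OF iphi nn] by simp
  then show ?thesis by eventually_elim (auto simp: \<phi>_def split: if_splits)
qed

definition K2F where
  "K2F = (\<lambda>g. (g, integral\<^sup>L MT (\<lambda>t. 0.8 * \<bar>fst g t\<bar> + 0.4 * \<bar>snd g t\<bar>))) ` U"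

lemma K2_eq: "K2 = {u \<in> U. \<forall>p\<in>K2F. innerU u (fst p) \<le> snd p}"
proof safe
  fix u assume "u \<in> K2" then show "u \<in> U" by (simp add: K2_def)
next
  fix u p assume u: "u \<in> K2" and p: "p \<in> K2F"
  then obtain g where g: "g \<in> U" "p = (g, integral\<^sup>L MT (\<lambda>t. 0.8 * \<bar>fst g t\<bar> + 0.4 * \<bar>snd g t\<bar>))"
    by (auto simp: K2F_def)
  have uU: "u \<in> U" using u by (simp add: K2_def)
  have "innerU u g \<le> integral\<^sup>L MT (\<lambda>t. 0.8 * \<bar>fst g t\<bar> + 0.4 * \<bar>snd g t\<bar>)"
    unfolding innerU_def
  proof (rule integral_mono_AE)
    show "integrable MT (\<lambda>t. fst u t * fst g t + snd u t * snd g t)" by (rule innerU_integrable[OF uU g(1)])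
    show "integrable MT (\<lambda>t. 0.8 * \<bar>fst g t\<bar> + 0.4 * \<bar>snd g t\<bar>)"
      using L2T_integrable[OF L2T_abs[OF U_fst[OF g(1)]]] L2T_integrable[OF L2T_abs[OF U_snd[OF g(1)]]] by simp
    show "AE t in MT. fst u t * fst g t + snd u t * snd g t \<le> 0.8 * \<bar>fst g t\<bar> + 0.4 * \<bar>snd g t\<bar>"
      using K2_AE[OF u]
    proof eventually_elim
      case (elim t)
      then have "fst u t * fst g t \<le> 0.8 * \<bar>fst g t\<bar>" "snd u t * snd g t \<le> 0.4 * \<bar>snd g t\<bar>"
        using mult_abs_aux by blast+
      then show ?case by linarith
    qed
  qed
  then show "innerU u (fst p) \<le> snd p" using g by simp
next
  fix u assume u: "u \<in> U" and H: "\<forall>p\<in>K2F. innerU u (fst p) \<le> snd p"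
  have H': "innerU u g \<le> integral\<^sup>L MT (\<lambda>t. 0.8 * \<bar>fst g t\<bar> + 0.4 * \<bar>snd g t\<bar>)" if "g \<in> U" for g
    using H that by (auto simp: K2F_def)
  have a: "AE t in MT. \<bar>fst u t\<bar> \<le> 0.8"
  proof (rule ae_bound_from_ineq[OF U_fst[OF u]])
    fix w assume w: "w \<in> L2T"
    have "(w, \<lambda>t. 0) \<in> U" using w L2T_zero by (simp add: U_def)
    from H'[OF this] show "integral\<^sup>L MT (\<lambda>t. fst u t * w t) \<le> integral\<^sup>L MT (\<lambda>t. 0.8 * \<bar>w t\<bar>)"
      by (simp add: innerU_def)
  qed simp
  have b: "AE t in MT. \<bar>snd u t\<bar> \<le> 0.4"
  proof (rule ae_bound_from_ineq[OF U_snd[OF u]])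
    fix w assume w: "w \<in> L2T"
    have "(\<lambda>t. 0, w) \<in> U" using w L2T_zero by (simp add: U_def)
    from H'[OF this] show "integral\<^sup>L MT (\<lambda>t. snd u t * w t) \<le> integral\<^sup>L MT (\<lambda>t. 0.4 * \<bar>w t\<bar>)"
      by (simp add: innerU_def)
  qed simp
  show "u \<in> K2" using u a b by (simp add: K2_def AE_conj_iff)
qed

lemma K2_closed: "closedin weakU K2"
  unfolding K2_eq by (rule closedin_halfspaces) (auto simp: K2F_def)

lemma zeroU_K2: "zeroU \<in> K2"
  using zeroU_U by (simp add: K2_def zeroU_def)

lemma phi_real: "phi u = ereal (nqU u)" by (rule phi_nqU)

lemma f_le: "f_param u z \<le> ereal \<alpha> \<longleftrightarrow> (phi u \<le> ereal \<alpha> \<and> h u = z \<and> u \<in> K2)"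
  by (auto simp: f_param_def indicatorF_def phi_real)

lemma f_not_minf: "f_param u z \<noteq> - \<infinity>"
  by (auto simp: f_param_def indicatorF_def phi_real)

theorem corollary6p3:
  shows "(proper_on U phi \<and> lsc_wrt weakU phi)
       \<and> (\<forall>\<alpha>::real. rel_compact_in weakU {u \<in> U. phi u \<le> ereal \<alpha>})
       \<and> (proper_on (U \<times> UNIV) (case_prod f_param)
          \<and> lsc_wrt (prod_topology weakU euclidean) (case_prod f_param)
          \<and> weakly_level_compact f_param)"
proof (intro conjI allI)
  show "proper_on U phi"
    unfolding proper_on_def
  proof (intro conjI)
    show "\<forall>x\<in>U. phi x \<noteq> - \<infinity>" by (simp add: phi_real)
    show "\<exists>x\<in>U. phi x \<noteq> \<infinity>" using zeroU_U by (intro bexI[of _ zeroU]) (simp_all add: phi_real)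
  qed
  show "lsc_wrt weakU phi"
    unfolding lsc_wrt_def using ball_closed by simp
  have rc: "rel_compact_in weakU {u \<in> U. phi u \<le> ereal \<alpha>}" for \<alpha>
    unfolding rel_compact_in_def closure_of_closedin[OF ball_closed] by (rule ball_compact)
  show "rel_compact_in weakU {u \<in> U. phi u \<le> ereal \<alpha>}" for \<alpha> by (rule rc)
  show "proper_on (U \<times> UNIV) (case_prod f_param)"
    unfolding proper_on_def
  proof (intro conjI)
    show "\<forall>x\<in>U \<times> UNIV. case_prod f_param x \<noteq> - \<infinity>" using f_not_minf by auto
    have "f_param zeroU (h zeroU) = ereal (nqU zeroU)"
      using zeroU_K2 by (simp add: f_param_def indicatorF_def phi_real)
    then show "\<exists>x\<in>U \<times> UNIV. case_prod f_param x \<noteq> \<infinity>" using zeroU_U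
      by (intro bexI[of _ "(zeroU, h zeroU)"]) simp_all
  qed
  show "weakly_level_compact f_param"
    unfolding weakly_level_compact_def
  proof (intro allI)
    fix zbar :: "real^6" and \<alpha> :: real
    show "\<exists>V B. open V \<and> zbar \<in> V \<and> B \<subseteq> U \<and> rel_compact_in weakU B \<and>
        (\<forall>z\<in>V. {u \<in> U. f_param u z \<le> ereal \<alpha>} \<subseteq> B)"
      by (intro exI[of _ UNIV] exI[of _ "{u \<in> U. phi u \<le> ereal \<alpha>}"]) (auto simp: rc f_le)
  qed
  show "lsc_wrt (prod_topology weakU euclidean) (case_prod f_param)"
    unfolding lsc_wrt_def
  proof
    fix \<alpha> :: real
    define X where "X = prod_topology weakU (euclidean :: (real^6) topology)"
    define S where "S = K2 \<inter> {u \<in> U. phi u \<le> ereal \<alpha>}"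
    have Scl: "closedin weakU S" unfolding S_def by (rule closedin_Int[OF K2_closed ball_closed])
    have SK: "S \<subseteq> K2" by (auto simp: S_def)
    have cl1: "closedin X (S \<times> UNIV)" unfolding X_def closedin_prod_Times_iff using Scl by simp
    have tsp: "topspace (subtopology X (S \<times> UNIV)) = S \<times> UNIV"
      using closedin_subset[OF Scl] by (auto simp: X_def)
    have cfst: "continuous_map (subtopology X (S \<times> UNIV)) (subtopology weakU K2) fst"
      unfolding continuous_map_in_subtopology
    proof
      show "continuous_map (subtopology X (S \<times> UNIV)) weakU fst"
        unfolding X_def by (rule continuous_map_from_subtopology[OF continuous_map_fst])
      show "fst \<in> topspace (subtopology X (S \<times> UNIV)) \<rightarrow> K2" using tsp SK by auto
    qed
    have csnd: "continuous_map (subtopology X (S \<times> UNIV)) euclidean snd"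
      unfolding X_def by (rule continuous_map_from_subtopology[OF continuous_map_snd])
    have cmap: "continuous_map (subtopology X (S \<times> UNIV)) euclidean (\<lambda>x. h (fst x) - snd x)"
    proof (rule continuous_map_diff)
      show "continuous_map (subtopology X (S \<times> UNIV)) euclidean (\<lambda>x. h (fst x))"
        using continuous_map_compose[OF cfst h_cont] by (simp add: o_def)
    qed (rule csnd)
    have "closedin (subtopology X (S \<times> UNIV)) {x \<in> topspace (subtopology X (S \<times> UNIV)). h (fst x) - snd x \<in> {0}}"
      by (rule closedin_continuous_map_preimage[OF cmap]) simp
    then have cl2: "closedin X {x \<in> topspace (subtopology X (S \<times> UNIV)). h (fst x) - snd x \<in> {0}}"
      by (rule closedin_trans_full[OF _ cl1])
    have eq: "{x \<in> topspace X. case_prod f_param x \<le> ereal \<alpha>} =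
        {x \<in> topspace (subtopology X (S \<times> UNIV)). h (fst x) - snd x \<in> {0}}"
      unfolding tsp by (auto simp: X_def f_le S_def K2_def)
    show "closedin (prod_topology weakU euclidean) {x \<in> topspace (prod_topology weakU euclidean). case_prod f_param x \<le> ereal \<alpha>}"
      using cl2 unfolding eq[unfolded X_def] X_def .
  qed
qed


end
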